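(* Let $\mathbb{k}$ be a field of characteristic $0$ containing a primitive $n$-th root of unity $\omega$, let $H=T_{n^2}(\omega)$ be the Taft Hopf algebra and $A=A_n(\omega)=\mathbb{k}[z]/(z^n-\omega)$ with $u$ the image of $z$. Let $A$ be the left $H$-module algebra with $g\cdot u=\omega u$ and $x\cdot u=1$, and the left $H$-comodule algebra via the algebra homomorphism $\rho:A\to H\otimes A$, $\rho(u)=\sum_{i=0}^{n-1}a_i\,x^ig^{-(i+1)}\otimes u^{i+1}$ where $a_i=(\omega-1)^i\omega^{i(i+1)/2}$. Then, for every $n$, $A$ is an object of the category ${}^H_H\mathcal{YD}$ of (left, left) Yetter–Drinfeld modules, i.e. for all $h\in H$ and $m\in A$, $$\sum h_1m_{-1}\otimes h_2\cdot m_0=\sum (h_1\cdot m)_{-1}h_2\otimes (h_1\cdot m)_0,$$ where $\rho(m)=\sum m_{-1}\otimes m_0$ and $\Delta(h)=\sum h_1\otimes h_2$.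
   Context: The Taft Hopf algebra is $H=T_{n^2}(\omega)=\mathbb{k}\langle x,g\mid x^n=0,\ g^n=1,\ xg=\omega gx\rangle$ with $\Delta(g)=g\otimes g$, $\Delta(x)=x\otimes 1+g\otimes x$, $\epsilon(g)=1$, $\epsilon(x)=0$, $S(g)=g^{-1}$, $S(x)=-g^{-1}x$. "Module algebra" means $h\cdot(ab)=\sum(h_1\cdot a)(h_2\cdot b)$ and $h\cdot 1=\epsilon(h)1$; so the action is determined by $g\cdot u=\omega u$, $x\cdot u=1$ (e.g. $x\cdot u^{i+1}=(\sum_{j=0}^i\omega^j)u^i$). $A$ is an $H$-comodule algebra via $\rho$, meaning $(\mathrm{id}\otimes\rho)\rho=(\Delta\otimes\mathrm{id})\rho$. *)

theory Defs
  imports Main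
begin

text \<open>
Fix n and omega.
 * An element of H = T_{n^2}(omega) is a coefficient function  f :: nat => nat => 'k,
   f a b being the coefficient of the PBW basis element g^a x^b  (0 <= a,b < n).
 * An element of A = k[z]/(z^n - omega) is  m :: nat => 'k,  m i the coefficient of u^i (0 <= i < n).
 * H (x) A  is  nat => nat => nat => 'k  (coefficient of g^a x^b (x) u^i).
 * H (x) H  is  nat => nat => nat => nat => 'k  (coefficient of g^a x^b (x) g^c x^d).
All constructions below vanish outside the index range {0..<n}.
\<close>

type_synonym 'k Hel = "nat \<Rightarrow> nat \<Rightarrow> 'k"
type_synonym 'k Ael = "nat \<Rightarrow> 'k"
type_synonym 'k HAel = "nat \<Rightarrow> nat \<Rightarrow> nat \<Rightarrow> 'k"
type_synonym 'k HHel = "nat \<Rightarrow> nat \<Rightarrow> nat \<Rightarrow> nat \<Rightarrow> 'k"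

definition primitive_root :: "nat \<Rightarrow> 'k::field \<Rightarrow> bool" where
  "primitive_root n w \<longleftrightarrow> 0 < n \<and> w ^ n = 1 \<and> (\<forall>k. 0 < k \<and> k < n \<longrightarrow> w ^ k \<noteq> 1)"

text \<open>Basis element g^a x^b, using g^n = 1 and x^n = 0.\<close>
definition Hb :: "nat \<Rightarrow> nat \<Rightarrow> nat \<Rightarrow> 'k::field Hel" where
  "Hb n a b = (\<lambda>c d. if c = a mod n \<and> d = b \<and> b < n then 1 else 0)"

text \<open>Product: (g^a x^b)(g^a' x^b') = omega^(b a') g^(a+a') x^(b+b'), from x g = omega g x.\<close>
definition Hmul :: "nat \<Rightarrow> 'k::field \<Rightarrow> 'k Hel \<Rightarrow> 'k Hel \<Rightarrow> 'k Hel" where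
  "Hmul n w f h = (\<lambda>c d. if c < n \<and> d < n then
     (\<Sum>a<n. \<Sum>b<n. \<Sum>a'<n. \<Sum>b'<n. f a b * h a' b' * w ^ (b * a') * Hb n (a + a') (b + b') c d)
     else 0)"

definition Hone :: "nat \<Rightarrow> 'k::field Hel" where "Hone n = Hb n 0 0"
definition Hg :: "nat \<Rightarrow> 'k::field Hel" where "Hg n = Hb n 1 0"
definition Hx :: "nat \<Rightarrow> 'k::field Hel" where "Hx n = Hb n 0 1"

definition Hpow :: "nat \<Rightarrow> 'k::field \<Rightarrow> 'k Hel \<Rightarrow> nat \<Rightarrow> 'k Hel" where
  "Hpow n w f k = (Hmul n w f ^^ k) (Hone n)"

definition Hginv :: "nat \<Rightarrow> 'k::field \<Rightarrow> 'k Hel" where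
  "Hginv n w = Hpow n w (Hg n) (n - 1)"

definition Heps :: "nat \<Rightarrow> 'k::field Hel \<Rightarrow> 'k" where
  "Heps n f = (\<Sum>a<n. f a 0)"

definition Ae :: "nat \<Rightarrow> nat \<Rightarrow> 'k::field Ael" where
  "Ae n i = (\<lambda>k. if k < n \<and> k = i then 1 else 0)"

definition Aone :: "nat \<Rightarrow> 'k::field Ael" where "Aone n = Ae n 0"
definition Au :: "nat \<Rightarrow> 'k::field Ael" where "Au n = Ae n 1"

text \<open>Product, using u^n = omega.\<close>
definition Amul :: "nat \<Rightarrow> 'k::field \<Rightarrow> 'k Ael \<Rightarrow> 'k Ael \<Rightarrow> 'k Ael" where
  "Amul n w m m' = (\<lambda>k. if k < n then
     (\<Sum>i<n. \<Sum>j<n. m i * m' j *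
        (if i + j < n then (if k = i + j then 1 else 0) else (if k = i + j - n then w else 0)))
     else 0)"

definition Apow :: "nat \<Rightarrow> 'k::field \<Rightarrow> 'k Ael \<Rightarrow> nat \<Rightarrow> 'k Ael" where
  "Apow n w m k = (Amul n w m ^^ k) (Aone n)"

definition HAt :: "nat \<Rightarrow> 'k::field Hel \<Rightarrow> 'k Ael \<Rightarrow> 'k HAel" where
  "HAt n f m = (\<lambda>a b i. if a < n \<and> b < n \<and> i < n then f a b * m i else 0)"

definition HAmul :: "nat \<Rightarrow> 'k::field \<Rightarrow> 'k HAel \<Rightarrow> 'k HAel \<Rightarrow> 'k HAel" where
  "HAmul n w T S = (\<lambda>c d k.
     \<Sum>a<n. \<Sum>b<n. \<Sum>i<n. \<Sum>a'<n. \<Sum>b'<n. \<Sum>i'<n.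
       T a b i * S a' b' i' * HAt n (Hmul n w (Hb n a b) (Hb n a' b')) (Amul n w (Ae n i) (Ae n i')) c d k)"

definition HApow :: "nat \<Rightarrow> 'k::field \<Rightarrow> 'k HAel \<Rightarrow> nat \<Rightarrow> 'k HAel" where
  "HApow n w T k = (HAmul n w T ^^ k) (HAt n (Hone n) (Aone n))"

definition HHt :: "nat \<Rightarrow> 'k::field Hel \<Rightarrow> 'k Hel \<Rightarrow> 'k HHel" where
  "HHt n f h = (\<lambda>a b a' b'. if a < n \<and> b < n \<and> a' < n \<and> b' < n then f a b * h a' b' else 0)"

definition HHmul :: "nat \<Rightarrow> 'k::field \<Rightarrow> 'k HHel \<Rightarrow> 'k HHel \<Rightarrow> 'k HHel" where
  "HHmul n w T S = (\<lambda>c d c' d'.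
     \<Sum>a<n. \<Sum>b<n. \<Sum>a'<n. \<Sum>b'<n. \<Sum>p<n. \<Sum>q<n. \<Sum>p'<n. \<Sum>q'<n.
       T a b a' b' * S p q p' q' *
       HHt n (Hmul n w (Hb n a b) (Hb n p q)) (Hmul n w (Hb n a' b') (Hb n p' q')) c d c' d')"

definition HHpow :: "nat \<Rightarrow> 'k::field \<Rightarrow> 'k HHel \<Rightarrow> nat \<Rightarrow> 'k HHel" where
  "HHpow n w T k = (HHmul n w T ^^ k) (HHt n (Hone n) (Hone n))"

definition Dg :: "nat \<Rightarrow> 'k::field HHel" where "Dg n = HHt n (Hg n) (Hg n)"
definition Dx :: "nat \<Rightarrow> 'k::field HHel" where
  "Dx n = (\<lambda>a b a' b'. HHt n (Hx n) (Hone n) a b a' b' + HHt n (Hg n) (Hx n) a b a' b')"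

definition Delta :: "nat \<Rightarrow> 'k::field \<Rightarrow> 'k Hel \<Rightarrow> 'k HHel" where
  "Delta n w f = (\<lambda>a b a' b'. \<Sum>c<n. \<Sum>d<n.
      f c d * HHmul n w (HHpow n w (Dg n) c) (HHpow n w (Dx n) d) a b a' b')"

definition acoef :: "'k::field \<Rightarrow> nat \<Rightarrow> 'k" where
  "acoef w i = (w - 1) ^ i * w ^ (i * (i + 1) div 2)"

definition rho_u :: "nat \<Rightarrow> 'k::field \<Rightarrow> 'k HAel" where
  "rho_u n w = (\<lambda>a b k. \<Sum>i<n. acoef w i *
      HAt n (Hmul n w (Hpow n w (Hx n) i) (Hpow n w (Hginv n w) (i + 1))) (Apow n w (Au n) (i + 1)) a b k)"

definition rho :: "nat \<Rightarrow> 'k::field \<Rightarrow> 'k Ael \<Rightarrow> 'k HAel" where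
  "rho n w m = (\<lambda>a b k. \<Sum>i<n. m i * HApow n w (rho_u n w) i a b k)"

section \<open>Actions of H on A, given by the action of basis elements on basis elements, extended bilinearly\<close>

definition act :: "nat \<Rightarrow> (nat \<Rightarrow> nat \<Rightarrow> nat \<Rightarrow> 'k::field Ael) \<Rightarrow> 'k Hel \<Rightarrow> 'k Ael \<Rightarrow> 'k Ael" where
  "act n act0 h m = (\<lambda>k. if k < n then
      (\<Sum>a<n. \<Sum>b<n. \<Sum>i<n. h a b * m i * act0 a b i k) else 0)"

definition is_module_algebra :: "nat \<Rightarrow> 'k::field \<Rightarrow> (nat \<Rightarrow> nat \<Rightarrow> nat \<Rightarrow> 'k Ael) \<Rightarrow> bool" where
  "is_module_algebra n w act0 \<longleftrightarrow>
     (\<forall>h h' m. act n act0 (Hmul n w h h') m = act n act0 h (act n act0 h' m)) \<and>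
     (\<forall>m. act n act0 (Hone n) m = (\<lambda>k. if k < n then m k else 0)) \<and>
     (\<forall>h m m'. act n act0 h (Amul n w m m') =
        (\<lambda>k. \<Sum>a<n. \<Sum>b<n. \<Sum>a'<n. \<Sum>b'<n. Delta n w h a b a' b' *
             Amul n w (act n act0 (Hb n a b) m) (act n act0 (Hb n a' b') m') k)) \<and>
     (\<forall>h. act n act0 h (Aone n) = (\<lambda>k. Heps n h * Aone n k))"

definition YD_lhs :: "nat \<Rightarrow> 'k::field \<Rightarrow> (nat \<Rightarrow> nat \<Rightarrow> nat \<Rightarrow> 'k Ael) \<Rightarrow> 'k Hel \<Rightarrow> 'k Ael \<Rightarrow> 'k HAel" where
  "YD_lhs n w act0 h m = (\<lambda>c d k.
     \<Sum>a<n. \<Sum>b<n. \<Sum>a'<n. \<Sum>b'<n. \<Sum>p<n. \<Sum>q<n. \<Sum>i<n.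
       Delta n w h a b a' b' * rho n w m p q i *
       HAt n (Hmul n w (Hb n a b) (Hb n p q)) (act n act0 (Hb n a' b') (Ae n i)) c d k)"

definition YD_rhs :: "nat \<Rightarrow> 'k::field \<Rightarrow> (nat \<Rightarrow> nat \<Rightarrow> nat \<Rightarrow> 'k Ael) \<Rightarrow> 'k Hel \<Rightarrow> 'k Ael \<Rightarrow> 'k HAel" where
  "YD_rhs n w act0 h m = (\<lambda>c d k.
     \<Sum>a<n. \<Sum>b<n. \<Sum>a'<n. \<Sum>b'<n. \<Sum>p<n. \<Sum>q<n. \<Sum>i<n.
       Delta n w h a b a' b' * rho n w (act n act0 (Hb n a b) m) p q i *
       HAt n (Hmul n w (Hb n p q) (Hb n a' b')) (Ae n i) c d k)"

end

theory Submission
  imports Defs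
begin

lemma if_mult_delta: "(if P then 1 else 0) * (x::'a::semiring_1) = (if P then x else 0)"
  "x * (if P then 1 else 0) = (if P then x else 0)" by auto
lemma if_conj0: "(if P \<and> Q then x else 0) = (if P then if Q then x else 0 else 0)" by auto
lemma sum_if_const: "(\<Sum>x\<in>A. if P then f x else 0) = (if P then (\<Sum>x\<in>A. f x) else 0)" by auto
lemma if_mult0: "(if P then x else 0) * (y::'a::semiring_0) = (if P then x * y else 0)"
  "y * (if P then x else 0) = (if P then y * x else 0)" by auto
lemma sum_delta_gen:
  assumes "finite I" "\<And>u. u \<in> I \<Longrightarrow> u \<noteq> a \<Longrightarrow> f u = 0"
  shows "(\<Sum>u\<in>I. f u) = (if a \<in> I then f a else 0)"
proof -
  have "(\<Sum>u\<in>I. f u) = (\<Sum>u\<in>I. if u = a then f a else 0)"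
    using assms(2) by (intro sum.cong) auto
  then show ?thesis using assms(1) by simp
qed

lemma sum2_single:
  assumes "finite A" "finite B" "\<And>p q. p \<in> A \<Longrightarrow> q \<in> B \<Longrightarrow> (p, q) \<noteq> (a, b) \<Longrightarrow> F p q = 0"
  shows "(\<Sum>p\<in>A. \<Sum>q\<in>B. F p q) = (if a \<in> A \<and> b \<in> B then F a b else 0)"
proof -
  have "(\<Sum>p\<in>A. \<Sum>q\<in>B. F p q) = (if a \<in> A then (\<Sum>q\<in>B. F a q) else 0)"
    using assms by (intro sum_delta_gen) (auto intro!: sum.neutral)
  moreover have "(\<Sum>q\<in>B. F a q) = (if b \<in> B then F a b else 0)" if "a \<in> A"
    using assms that by (intro sum_delta_gen) auto
  ultimately show ?thesis by auto
qed

lemma sum3_single: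
  assumes "finite A" "finite B" "finite C" "\<And>p q r. p \<in> A \<Longrightarrow> q \<in> B \<Longrightarrow> r \<in> C \<Longrightarrow> (p, q, r) \<noteq> (a, b, c) \<Longrightarrow> F p q r = 0"
  shows "(\<Sum>p\<in>A. \<Sum>q\<in>B. \<Sum>r\<in>C. F p q r) = (if a \<in> A \<and> b \<in> B \<and> c \<in> C then F a b c else 0)"
proof -
  have "(\<Sum>p\<in>A. \<Sum>q\<in>B. \<Sum>r\<in>C. F p q r) = (if a \<in> A \<and> b \<in> B then (\<Sum>r\<in>C. F a b r) else 0)"
    using assms by (intro sum2_single) (auto intro!: sum.neutral)
  moreover have "(\<Sum>r\<in>C. F a b r) = (if c \<in> C then F a b c else 0)" if "a \<in> A" "b \<in> B"
    using assms that by (intro sum_delta_gen) auto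
  ultimately show ?thesis by auto
qed

lemma sum4_single:
  assumes "finite A" "finite B" "finite C" "finite D"
    "\<And>p q r s. p \<in> A \<Longrightarrow> q \<in> B \<Longrightarrow> r \<in> C \<Longrightarrow> s \<in> D \<Longrightarrow> (p, q, r, s) \<noteq> (a, b, c, d) \<Longrightarrow> F p q r s = 0"
  shows "(\<Sum>p\<in>A. \<Sum>q\<in>B. \<Sum>r\<in>C. \<Sum>s\<in>D. F p q r s) = (if a \<in> A \<and> b \<in> B \<and> c \<in> C \<and> d \<in> D then F a b c d else 0)"
proof -
  have "(\<Sum>p\<in>A. \<Sum>q\<in>B. \<Sum>r\<in>C. \<Sum>s\<in>D. F p q r s) = (if a \<in> A \<and> b \<in> B \<and> c \<in> C then (\<Sum>s\<in>D. F a b c s) else 0)"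
    using assms by (intro sum3_single) (auto intro!: sum.neutral)
  moreover have "(\<Sum>s\<in>D. F a b c s) = (if d \<in> D then F a b c d else 0)" if "a \<in> A" "b \<in> B" "c \<in> C"
    using assms that by (intro sum_delta_gen) auto
  ultimately show ?thesis by auto
qed

lemmas collapse = if_mult_delta if_conj0 sum_if_const if_mult0 sum.delta sum.delta'

definition gm :: "'i set \<Rightarrow> ('i \<Rightarrow> 'i \<Rightarrow> 'i) \<Rightarrow> ('i \<Rightarrow> 'i \<Rightarrow> 'k::comm_ring_1) \<Rightarrow> ('i \<Rightarrow> 'k) \<Rightarrow> ('i \<Rightarrow> 'k) \<Rightarrow> 'i \<Rightarrow> 'k" where
  "gm I m c T S z = (\<Sum>s\<in>I. \<Sum>t\<in>I. T s * S t * c s t * (if m s t = z then 1 else 0))"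

lemma gm_assoc:
  assumes fin: "finite I"
    and cl: "\<And>s t. s \<in> I \<Longrightarrow> t \<in> I \<Longrightarrow> c s t \<noteq> 0 \<Longrightarrow> m s t \<in> I"
    and B: "\<And>s t r. s \<in> I \<Longrightarrow> t \<in> I \<Longrightarrow> r \<in> I \<Longrightarrow> c s t * c (m s t) r = c t r * c s (m t r)"
    and C: "\<And>s t r. s \<in> I \<Longrightarrow> t \<in> I \<Longrightarrow> r \<in> I \<Longrightarrow> c s t * c (m s t) r \<noteq> 0 \<Longrightarrow> m (m s t) r = m s (m t r)"
  shows "gm I m c (gm I m c T S) R z = gm I m c T (gm I m c S R) z"
proof -
  define K where "K s t r = c s t * c (m s t) r * (if m (m s t) r = z then 1 else 0)" for s t r
  define K' where "K' s t r = c t r * c s (m t r) * (if m s (m t r) = z then 1 else 0)" for s t r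
  have KK: "K s t r = K' s t r" if "s \<in> I" "t \<in> I" "r \<in> I" for s t r
    using B[OF that] C[OF that] unfolding K_def K'_def by (cases "c s t * c (m s t) r = 0") auto
  have L: "gm I m c (gm I m c T S) R z = (\<Sum>s\<in>I. \<Sum>t\<in>I. \<Sum>r\<in>I. T s * S t * R r * K s t r)"
  proof -
    have "gm I m c (gm I m c T S) R z =
      (\<Sum>u\<in>I. \<Sum>r\<in>I. \<Sum>s\<in>I. \<Sum>t\<in>I. T s * S t * c s t * (if m s t = u then 1 else 0) * (R r * c u r * (if m u r = z then 1 else 0)))"
      by (simp add: gm_def sum_distrib_right mult.assoc)
    also have "\<dots> = (\<Sum>r\<in>I. \<Sum>u\<in>I. \<Sum>s\<in>I. \<Sum>t\<in>I. T s * S t * c s t * (if m s t = u then 1 else 0) * (R r * c u r * (if m u r = z then 1 else 0)))"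
      by (rule sum.swap)
    also have "\<dots> = (\<Sum>r\<in>I. \<Sum>s\<in>I. \<Sum>t\<in>I. \<Sum>u\<in>I. T s * S t * c s t * (if m s t = u then 1 else 0) * (R r * c u r * (if m u r = z then 1 else 0)))"
      apply (rule sum.cong[OF refl])
      apply (rule trans[OF sum.swap])
      apply (rule sum.cong[OF refl])
      by (rule sum.swap)
    also have "\<dots> = (\<Sum>r\<in>I. \<Sum>s\<in>I. \<Sum>t\<in>I. T s * S t * R r * K s t r)"
    proof (intro sum.cong refl)
      fix r s t assume "r \<in> I" "s \<in> I" "t \<in> I"
      then show "(\<Sum>u\<in>I. T s * S t * c s t * (if m s t = u then 1 else 0) * (R r * c u r * (if m u r = z then 1 else 0))) = T s * S t * R r * K s t r"
        using cl[of s t] fin by (subst sum_delta_gen[where a="m s t"]) (auto simp: K_def, metis mult_zero_left mult_zero_right)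
    qed
    also have "\<dots> = (\<Sum>s\<in>I. \<Sum>r\<in>I. \<Sum>t\<in>I. T s * S t * R r * K s t r)" by (rule sum.swap)
    also have "\<dots> = (\<Sum>s\<in>I. \<Sum>t\<in>I. \<Sum>r\<in>I. T s * S t * R r * K s t r)"
      by (rule sum.cong[OF refl], rule sum.swap)
    finally show ?thesis .
  qed
  have Rr: "gm I m c T (gm I m c S R) z = (\<Sum>s\<in>I. \<Sum>t\<in>I. \<Sum>r\<in>I. T s * S t * R r * K' s t r)"
  proof -
    have "gm I m c T (gm I m c S R) z =
      (\<Sum>s\<in>I. \<Sum>u\<in>I. \<Sum>t\<in>I. \<Sum>r\<in>I. (S t * R r * c t r * (if m t r = u then 1 else 0)) * (T s * c s u * (if m s u = z then 1 else 0)))"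
      by (simp add: gm_def sum_distrib_right sum_distrib_left mult.assoc mult.left_commute)
    also have "\<dots> = (\<Sum>s\<in>I. \<Sum>t\<in>I. \<Sum>r\<in>I. \<Sum>u\<in>I. (S t * R r * c t r * (if m t r = u then 1 else 0)) * (T s * c s u * (if m s u = z then 1 else 0)))"
      apply (rule sum.cong[OF refl])
      apply (rule trans[OF sum.swap])
      apply (rule sum.cong[OF refl])
      by (rule sum.swap)
    also have "\<dots> = (\<Sum>s\<in>I. \<Sum>t\<in>I. \<Sum>r\<in>I. T s * S t * R r * K' s t r)"
    proof (intro sum.cong refl)
      fix r s t assume "r \<in> I" "s \<in> I" "t \<in> I"
      then show "(\<Sum>u\<in>I. (S t * R r * c t r * (if m t r = u then 1 else 0)) * (T s * c s u * (if m s u = z then 1 else 0))) = T s * S t * R r * K' s t r"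
        using cl[of t r] fin by (subst sum_delta_gen[where a="m t r"]) (auto simp: K'_def, metis mult_zero_left mult_zero_right)
    qed
    finally show ?thesis .
  qed
  show ?thesis unfolding L Rr by (intro sum.cong refl) (simp add: KK)
qed

lemma sum_reorder3: "(\<Sum>i\<in>I. \<Sum>a\<in>A. \<Sum>b\<in>B. f i a b) = (\<Sum>a\<in>A. \<Sum>b\<in>B. \<Sum>i\<in>I. f i a b)"
  by (rule trans[OF sum.swap], rule sum.cong[OF refl], rule sum.swap)

lemma sum_reorder2: "(\<Sum>i\<in>I. \<Sum>a\<in>A. f i a) = (\<Sum>a\<in>A. \<Sum>i\<in>I. f i a)"
  by (rule sum.swap)

lemma gm_sum_left: "gm I m c (\<lambda>s. \<Sum>j\<in>J. F j s) S z = (\<Sum>j\<in>J. gm I m c (F j) S z)"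
  unfolding gm_def by (simp add: sum_distrib_right sum_reorder3[where I=J, symmetric] mult.assoc)

lemma gm_sum_right: "gm I m c T (\<lambda>s. \<Sum>j\<in>J. F j s) z = (\<Sum>j\<in>J. gm I m c T (F j) z)"
  unfolding gm_def by (simp add: sum_distrib_left sum_distrib_right sum_reorder3[where I=J, symmetric] mult.assoc mult.left_commute)

lemma gm_scal_left: "gm I m c (\<lambda>s. a * F s) S z = a * gm I m c F S z"
  unfolding gm_def by (simp add: sum_distrib_left mult.assoc)

lemma gm_scal_right: "gm I m c T (\<lambda>s. a * F s) z = a * gm I m c T F z"
  unfolding gm_def by (simp add: sum_distrib_left mult_ac)

lemma gm_add_left: "gm I m c (\<lambda>s. F s + G s) S z = gm I m c F S z + gm I m c G S z"
  unfolding gm_def by (simp add: distrib_right sum.distrib)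

lemma gm_add_right: "gm I m c T (\<lambda>s. F s + G s) z = gm I m c T F z + gm I m c T G z"
  unfolding gm_def by (simp add: distrib_left distrib_right sum.distrib)

lemma gm_cong: "(\<And>s. s \<in> I \<Longrightarrow> T s = T' s) \<Longrightarrow> (\<And>s. s \<in> I \<Longrightarrow> S s = S' s) \<Longrightarrow> gm I m c T S z = gm I m c T' S' z"
  unfolding gm_def by (intro sum.cong refl) auto

lemma gm_unit_left:
  assumes "finite I" "e \<in> I" "\<And>t. t \<in> I \<Longrightarrow> c e t = 1 \<and> m e t = t" "\<And>s. s \<in> I \<Longrightarrow> E s = (if s = e then 1 else 0)"
  shows "gm I m c E S z = (if z \<in> I then S z else 0)"
proof -
  have "gm I m c E S z = (\<Sum>t\<in>I. S t * (if t = z then 1 else 0))"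
    unfolding gm_def using assms by (subst sum_delta_gen[where a=e]) (auto intro!: sum.cong)
  then show ?thesis using assms(1) by (simp add: if_mult_delta)
qed

lemma gm_unit_right:
  assumes "finite I" "e \<in> I" "\<And>t. t \<in> I \<Longrightarrow> c t e = 1 \<and> m t e = t" "\<And>s. s \<in> I \<Longrightarrow> E s = (if s = e then 1 else 0)"
  shows "gm I m c S E z = (if z \<in> I then S z else 0)"
proof -
  have "gm I m c S E z = (\<Sum>s\<in>I. \<Sum>t\<in>I. (if t = e then S s * c s e * (if m s e = z then 1 else 0) else 0))"
    unfolding gm_def using assms by (intro sum.cong refl) auto
  also have "\<dots> = (\<Sum>s\<in>I. S s * (if s = z then 1 else 0))"
    using assms by (intro sum.cong refl) auto
  finally show ?thesis using assms(1) by (simp add: if_mult_delta)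
qed


lemma Hb_simp: "a < n \<Longrightarrow> Hb n a b c d = (if c = a \<and> d = b \<and> b < n then 1 else 0)"
  by (simp add: Hb_def)

lemma Hb_nz: "Hb n a b c d \<noteq> 0 \<Longrightarrow> c < n \<and> d < n"
  by (auto simp: Hb_def split: if_splits)

lemma Hb_mod: "Hb n (a mod n) b = Hb n a b"
  by (simp add: Hb_def)

lemma pow_mod_n: "(w::'k::field) ^ n = 1 \<Longrightarrow> w ^ k = w ^ (k mod n)"
proof -
  assume "w ^ n = 1"
  have "w ^ k = (w ^ n) ^ (k div n) * w ^ (k mod n)"
    by (metis div_mult_mod_eq power_add power_mult mult.commute)
  then show ?thesis using \<open>w ^ n = 1\<close> by simp
qed

definition I2 :: "nat \<Rightarrow> (nat \<times> nat) set" where "I2 n = {..<n} \<times> {..<n}"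
fun m2 :: "nat \<Rightarrow> nat \<times> nat \<Rightarrow> nat \<times> nat \<Rightarrow> nat \<times> nat" where
  "m2 n (a,b) (a',b') = ((a+a') mod n, b+b')"
fun c2 :: "nat \<Rightarrow> 'k::field \<Rightarrow> nat \<times> nat \<Rightarrow> nat \<times> nat \<Rightarrow> 'k" where
  "c2 n w (a,b) (a',b') = (if b + b' < n then w^(b*a') else 0)"

lemma Hmul_gm: "Hmul n w f h c d = gm (I2 n) (m2 n) (c2 n w) (\<lambda>(a,b). f a b) (\<lambda>(a,b). h a b) (c,d)"
proof (cases "c < n \<and> d < n")
  case True
  then show ?thesis
    unfolding Hmul_def gm_def I2_def sum.cartesian_product' if_P[OF True]
    by (intro sum.cong refl) (auto simp: Hb_def mult.assoc)
next
  case False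
  have "gm (I2 n) (m2 n) (c2 n w) (\<lambda>(a,b). f a b) (\<lambda>(a,b). h a b) (c,d) = 0"
    unfolding gm_def I2_def sum.cartesian_product'
    by (intro sum.neutral ballI) (use False in auto)
  then show ?thesis using False unfolding Hmul_def by auto
qed

lemma Hmul_zero_out: "\<not> (c < n \<and> d < n) \<Longrightarrow> Hmul n w f h c d = 0"
  unfolding Hmul_def by auto

context
  fixes n :: nat and w :: "'k::field"
  assumes wn: "w ^ n = 1" and npos: "0 < n"
begin

lemma I2_props:
  shows "finite (I2 n)"
    and "\<And>s t. s \<in> I2 n \<Longrightarrow> t \<in> I2 n \<Longrightarrow> c2 n w s t \<noteq> 0 \<Longrightarrow> m2 n s t \<in> I2 n"
    and "\<And>s t r. s \<in> I2 n \<Longrightarrow> t \<in> I2 n \<Longrightarrow> r \<in> I2 n \<Longrightarrow> c2 n w s t * c2 n w (m2 n s t) r = c2 n w t r * c2 n w s (m2 n t r)"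
    and "\<And>s t r. s \<in> I2 n \<Longrightarrow> t \<in> I2 n \<Longrightarrow> r \<in> I2 n \<Longrightarrow> c2 n w s t * c2 n w (m2 n s t) r \<noteq> 0 \<Longrightarrow> m2 n (m2 n s t) r = m2 n s (m2 n t r)"
proof -
  show "finite (I2 n)" by (simp add: I2_def)
  show "\<And>s t. s \<in> I2 n \<Longrightarrow> t \<in> I2 n \<Longrightarrow> c2 n w s t \<noteq> 0 \<Longrightarrow> m2 n s t \<in> I2 n"
    using npos by (auto simp: I2_def split: if_splits)
  show "m2 n (m2 n s t) r = m2 n s (m2 n t r)" for s t r
    by (cases s; cases t; cases r) (simp add: mod_add_left_eq mod_add_right_eq add.assoc)
  fix s t r assume "s \<in> I2 n" "t \<in> I2 n" "r \<in> I2 n"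
  obtain a b where s: "s = (a,b)" by (cases s)
  obtain a' b' where t: "t = (a',b')" by (cases t)
  obtain a'' b'' where r: "r = (a'',b'')" by (cases r)
  have e: "w ^ (b * ((a' + a'') mod n)) = w ^ (b * (a' + a''))"
    by (metis mod_mult_right_eq pow_mod_n wn)
  show "c2 n w s t * c2 n w (m2 n s t) r = c2 n w t r * c2 n w s (m2 n t r)"
    unfolding s t r using e by (auto simp: power_add algebra_simps)
qed

lemma Hmul_assoc: "Hmul n w (Hmul n w f h) k c d = Hmul n w f (Hmul n w h k) c d"
proof -
  have 1: "(\<lambda>(a,b). Hmul n w f h a b) = gm (I2 n) (m2 n) (c2 n w) (\<lambda>(a,b). f a b) (\<lambda>(a,b). h a b)"
    by (auto simp: Hmul_gm)
  have 2: "(\<lambda>(a,b). Hmul n w h k a b) = gm (I2 n) (m2 n) (c2 n w) (\<lambda>(a,b). h a b) (\<lambda>(a,b). k a b)"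
    by (auto simp: Hmul_gm)
  show ?thesis unfolding Hmul_gm[of n w _ _ c d] 1 2
    by (rule gm_assoc[OF I2_props])
qed

end

lemma Hmul_basis:
  assumes "a < n" "b < n" "a' < n" "b' < n"
  shows "Hmul n w (Hb n a b) (Hb n a' b') c d = w^(b*a') * Hb n (a+a') (b+b') c d"
proof -
  have "Hmul n w (Hb n a b) (Hb n a' b') c d = (if c < n \<and> d < n then w^(b*a') * Hb n (a+a') (b+b') c d else 0)"
    using assms by (simp add: Hmul_def Hb_simp collapse cong: if_cong)
  then show ?thesis using Hb_nz[of n "a+a'" "b+b'" c d] by auto
qed

lemma Hmul_sum_right: "Hmul n w K (\<lambda>p q. \<Sum>j\<in>J. F j p q) c d = (\<Sum>j\<in>J. Hmul n w K (F j) c d)"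
proof -
  have "(\<lambda>(a,b). \<Sum>j\<in>J. F j a b) = (\<lambda>s. \<Sum>j\<in>J. (\<lambda>(a,b). F j a b) s)" by auto
  then show ?thesis unfolding Hmul_gm by (simp add: gm_sum_right)
qed

lemma Hmul_sum_left: "Hmul n w (\<lambda>p q. \<Sum>j\<in>J. F j p q) K c d = (\<Sum>j\<in>J. Hmul n w (F j) K c d)"
proof -
  have "(\<lambda>(a,b). \<Sum>j\<in>J. F j a b) = (\<lambda>s. \<Sum>j\<in>J. (\<lambda>(a,b). F j a b) s)" by auto
  then show ?thesis unfolding Hmul_gm by (simp add: gm_sum_left)
qed

lemma Hmul_scal_right: "Hmul n w K (\<lambda>p q. s * F p q) c d = s * Hmul n w K F c d"
proof -
  have "(\<lambda>(a,b). s * F a b) = (\<lambda>x. s * (\<lambda>(a,b). F a b) x)" by auto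
  then show ?thesis unfolding Hmul_gm by (simp add: gm_scal_right)
qed

lemma Hmul_scal_left: "Hmul n w (\<lambda>p q. s * F p q) K c d = s * Hmul n w F K c d"
proof -
  have "(\<lambda>(a,b). s * F a b) = (\<lambda>x. s * (\<lambda>(a,b). F a b) x)" by auto
  then show ?thesis unfolding Hmul_gm by (simp add: gm_scal_left)
qed

lemma Hmul_cong:
  "(\<And>a b. a < n \<Longrightarrow> b < n \<Longrightarrow> f a b = f' a b) \<Longrightarrow> (\<And>a b. a < n \<Longrightarrow> b < n \<Longrightarrow> h a b = h' a b)
   \<Longrightarrow> Hmul n w f h c d = Hmul n w f' h' c d"
  unfolding Hmul_def by (intro if_cong refl sum.cong) auto

lemma Hb_expand: "c < n \<Longrightarrow> d < n \<Longrightarrow> (\<Sum>p<n. \<Sum>q<n. F p q * Hb n p q c d) = F c d"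
  by (simp add: Hb_simp collapse cong: if_cong)

lemma Hmul_expand_right: "Hmul n w K F c d = (\<Sum>p<n. \<Sum>q<n. F p q * Hmul n w K (Hb n p q) c d)"
proof -
  have "Hmul n w K F c d = Hmul n w K (\<lambda>c d. \<Sum>p<n. \<Sum>q<n. F p q * Hb n p q c d) c d"
    by (rule Hmul_cong) (simp_all add: Hb_expand)
  also have "\<dots> = (\<Sum>p<n. \<Sum>q<n. F p q * Hmul n w K (Hb n p q) c d)"
    by (simp add: Hmul_sum_right Hmul_scal_right)
  finally show ?thesis .
qed

lemma Hmul_expand_left: "Hmul n w F K c d = (\<Sum>p<n. \<Sum>q<n. F p q * Hmul n w (Hb n p q) K c d)"
proof -
  have "Hmul n w F K c d = Hmul n w (\<lambda>c d. \<Sum>p<n. \<Sum>q<n. F p q * Hb n p q c d) K c d"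
    by (rule Hmul_cong) (simp_all add: Hb_expand)
  also have "\<dots> = (\<Sum>p<n. \<Sum>q<n. F p q * Hmul n w (Hb n p q) K c d)"
    by (simp add: Hmul_sum_left Hmul_scal_left)
  finally show ?thesis .
qed

lemma Hpow_Suc: "Hpow n w f (Suc k) = Hmul n w f (Hpow n w f k)"
  by (simp add: Hpow_def)

lemma Hpow_0: "Hpow n w f 0 = Hb n 0 0"
  by (simp add: Hpow_def Hone_def)

lemma Hb_big: "n \<le> b \<Longrightarrow> Hb n a b = (\<lambda>c d. 0)"
  by (auto simp: Hb_def fun_eq_iff)

lemma Hmul_zero_right: "Hmul n w K (\<lambda>c d. 0) = (\<lambda>c d. 0)"
  by (simp add: Hmul_def fun_eq_iff)

lemma Hpow_x: assumes "2 \<le> n" shows "Hpow n w (Hx n) i = Hb n 0 i"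
proof (induction i)
  case 0 then show ?case by (simp add: Hpow_0)
next
  case (Suc i)
  show ?case
  proof (cases "i < n")
    case True
    then show ?thesis using assms unfolding Hpow_Suc Suc.IH
      by (simp add: Hx_def fun_eq_iff Hmul_basis)
  next
    case False
    then show ?thesis by (simp add: Hpow_Suc Suc Hb_big Hmul_zero_right)
  qed
qed

lemma Hpow_g: assumes "2 \<le> n" shows "Hpow n w (Hg n) k = Hb n k 0"
proof (induction k)
  case 0 then show ?case by (simp add: Hpow_0)
next
  case (Suc k)
  have "Hmul n w (Hb n 1 0) (Hb n (k mod n) 0) = Hb n (1 + k mod n) 0"
    using assms by (simp add: fun_eq_iff Hmul_basis)
  also have "\<dots> = Hb n (Suc k) 0"
    by (metis Hb_mod mod_Suc_eq plus_1_eq_Suc)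
  finally show ?case unfolding Hpow_Suc Suc.IH by (simp add: Hg_def Hb_mod)
qed

lemma Hpow_ginv: assumes "2 \<le> n" shows "Hpow n w (Hginv n w) j = Hb n ((n - 1) * j) 0"
proof (induction j)
  case 0 then show ?case by (simp add: Hpow_0)
next
  case (Suc j)
  have "Hmul n w (Hb n (n-1) 0) (Hb n (((n - 1) * j) mod n) 0) = Hb n (n - 1 + ((n - 1) * j) mod n) 0"
    using assms by (simp add: fun_eq_iff Hmul_basis)
  also have "\<dots> = Hb n ((n - 1) * Suc j) 0"
    by (metis Hb_mod mod_add_right_eq mult_Suc_right)
  moreover have "Hginv n w = Hb n (n-1) 0" using assms by (simp add: Hginv_def Hpow_g)
  ultimately show ?case unfolding Hpow_Suc Suc.IH by (simp add: Hb_mod)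
qed

lemma Heps_Hb: "Heps n (Hb n a b) = (if b = 0 \<and> 0 < n then 1 else 0)"
  by (auto simp: Heps_def Hb_def collapse)


lemma Ae_simp: "Ae n i k = (if k < n \<and> k = i then 1 else 0)" by (simp add: Ae_def)

definition mA :: "nat \<Rightarrow> nat \<Rightarrow> nat \<Rightarrow> nat" where "mA n i j = (i + j) mod n"
definition cA :: "nat \<Rightarrow> 'k::field \<Rightarrow> nat \<Rightarrow> nat \<Rightarrow> 'k" where "cA n w i j = (if i + j < n then 1 else w)"

lemma Amul_gm: "Amul n w m m' k = gm {..<n} (mA n) (cA n w) m m' k"
proof (cases "k < n")
  case True
  show ?thesis unfolding Amul_def gm_def if_P[OF True]
  proof (intro sum.cong refl)
    fix i j assume "i \<in> {..<n}" "j \<in> {..<n}"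
    then have "(i + j) mod n = (if i + j < n then i + j else i + j - n)"
      by (simp add: mod_if)
    then show "m i * m' j * (if i + j < n then if k = i + j then 1 else 0 else if k = i + j - n then w else 0) =
         m i * m' j * cA n w i j * (if mA n i j = k then 1 else 0)"
      by (auto simp: mA_def cA_def)
  qed
next
  case False
  have "gm {..<n} (mA n) (cA n w) m m' k = 0"
    unfolding gm_def by (intro sum.neutral ballI) (use False in \<open>auto simp: mA_def\<close>)
  then show ?thesis using False unfolding Amul_def by auto
qed

lemma Amul_sum_right: "Amul n w K (\<lambda>p. \<Sum>j\<in>J. F j p) k = (\<Sum>j\<in>J. Amul n w K (F j) k)"
  unfolding Amul_gm by (simp add: gm_sum_right)
lemma Amul_sum_left: "Amul n w (\<lambda>p. \<Sum>j\<in>J. F j p) K k = (\<Sum>j\<in>J. Amul n w (F j) K k)"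
  unfolding Amul_gm by (simp add: gm_sum_left)
lemma Amul_scal_right: "Amul n w K (\<lambda>p. s * F p) k = s * Amul n w K F k"
  unfolding Amul_gm by (simp add: gm_scal_right)
lemma Amul_scal_left: "Amul n w (\<lambda>p. s * F p) K k = s * Amul n w F K k"
  unfolding Amul_gm by (simp add: gm_scal_left)
lemma Amul_add_left: "Amul n w (\<lambda>p. F p + G p) K k = Amul n w F K k + Amul n w G K k"
  unfolding Amul_gm by (simp add: gm_add_left)
lemma Amul_add_right: "Amul n w K (\<lambda>p. F p + G p) k = Amul n w K F k + Amul n w K G k"
  unfolding Amul_gm by (simp add: gm_add_right)
lemma Amul_cong: "(\<And>i. i < n \<Longrightarrow> m i = mm i) \<Longrightarrow> (\<And>i. i < n \<Longrightarrow> m' i = mm' i) \<Longrightarrow> Amul n w m m' k = Amul n w mm mm' k"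
  unfolding Amul_def by (intro if_cong refl sum.cong) auto
lemma Amul_out: "\<not> k < n \<Longrightarrow> Amul n w m m' k = 0"
  unfolding Amul_def by auto

lemma Amul_basis: "i < n \<Longrightarrow> j < n \<Longrightarrow> Amul n w (Ae n i) (Ae n j) k = (if i + j < n then Ae n (i+j) k else w * Ae n (i+j-n) k)"
  by (auto simp: Amul_def Ae_simp collapse cong: if_cong)

lemma Ae_expand: "(\<Sum>i<n. m i * Ae n i k) = (if k < n then m k else 0)"
  by (auto simp: Ae_simp collapse cong: if_cong)

lemma Amul_unit_left: "0 < n \<Longrightarrow> Amul n w (Ae n 0) m k = (if k < n then m k else 0)"
  by (auto simp: Amul_def Ae_simp collapse cong: if_cong)

lemma Amul_unit_right: "0 < n \<Longrightarrow> Amul n w m (Ae n 0) k = (if k < n then m k else 0)"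
  by (auto simp: Amul_def Ae_simp collapse cong: if_cong)

lemma Apow_Suc: "Apow n w m (Suc k) = Amul n w m (Apow n w m k)" by (simp add: Apow_def)

lemma Apow_u: assumes "2 \<le> n" "j < n" shows "Apow n w (Au n) j = Ae n j"
  using assms(2)
proof (induction j)
  case 0 then show ?case by (simp add: Apow_def Aone_def)
next
  case (Suc j)
  then show ?case using assms(1) unfolding Apow_Suc Suc.IH[OF Suc_lessD[OF Suc.prems]]
    by (simp add: Au_def fun_eq_iff Amul_basis)
qed

lemma Apow_u_n: assumes "2 \<le> n" shows "Apow n w (Au n) n = (\<lambda>k. w * Ae n 0 k)"
proof -
  obtain j where j: "n = Suc j" using assms by (cases n) auto
  have "j < n" using j by simp
  have "Apow n w (Au n) n = Amul n w (Au n) (Apow n w (Au n) j)" using j Apow_Suc by simp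
  also have "\<dots> = Amul n w (Ae n 1) (Ae n j)" by (metis Apow_u[OF assms \<open>j < n\<close>] Au_def)
  finally show ?thesis using assms j
    by (simp add: fun_eq_iff Amul_basis)
qed

lemma act_Ae: "act n act0 h (Ae n i) k = (if k < n \<and> i < n then (\<Sum>a<n. \<Sum>b<n. h a b * act0 a b i k) else 0)"
  by (auto simp: act_def Ae_simp collapse cong: if_cong)

lemma act_out: "\<not> k < n \<Longrightarrow> act n act0 h m k = 0" by (simp add: act_def)

lemma act_lin_m: "act n act0 h m k = (\<Sum>i<n. m i * act n act0 h (Ae n i) k)"
proof (cases "k < n")
  case True
  have "act n act0 h m k = (\<Sum>a<n. \<Sum>b<n. \<Sum>i<n. h a b * m i * act0 a b i k)"
    using True by (simp add: act_def)
  also have "\<dots> = (\<Sum>i<n. \<Sum>a<n. \<Sum>b<n. m i * (h a b * act0 a b i k))"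
    by (subst sum_reorder3[where I="{..<n}", symmetric]) (simp add: mult_ac)
  also have "\<dots> = (\<Sum>i<n. m i * act n act0 h (Ae n i) k)"
    using True by (simp add: act_Ae sum_distrib_left)
  finally show ?thesis .
qed (simp add: act_out)

lemma act_Hb: "a < n \<Longrightarrow> act n act0 (Hb n a b) m k = (if k < n \<and> b < n then (\<Sum>i<n. m i * act0 a b i k) else 0)"
  by (auto simp: act_def Hb_simp collapse cong: if_cong)

lemma act_lin_h: "act n act0 h m k = (\<Sum>a<n. \<Sum>b<n. h a b * act n act0 (Hb n a b) m k)"
proof -
  have "(\<Sum>a<n. \<Sum>b<n. h a b * act n act0 (Hb n a b) m k) = (if k < n then (\<Sum>a<n. \<Sum>b<n. \<Sum>i<n. h a b * m i * act0 a b i k) else 0)"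
    by (auto simp: act_Hb sum_distrib_left mult_ac intro!: sum.cong)
  then show ?thesis by (simp add: act_def)
qed

lemma act_sum_h: "act n act0 (\<lambda>c d. \<Sum>j\<in>J. F j c d) m k = (\<Sum>j\<in>J. act n act0 (F j) m k)"
  unfolding act_def by (simp add: sum_distrib_right sum.swap[where B=J])

lemma act_scal_h: "act n act0 (\<lambda>c d. s * F c d) m k = s * act n act0 F m k"
  unfolding act_def by (simp add: sum_distrib_left mult_ac)

lemma act_add_h: "act n act0 (\<lambda>c d. F c d + G c d) m k = act n act0 F m k + act n act0 G m k"
  unfolding act_def by (simp add: distrib_right sum.distrib)

lemma act_sum_m: "act n act0 h (\<lambda>i. \<Sum>j\<in>J. F j i) k = (\<Sum>j\<in>J. act n act0 h (F j) k)"
  unfolding act_def by (simp add: sum_distrib_left sum_distrib_right sum.swap[where B=J] mult_ac)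

lemma act_scal_m: "act n act0 h (\<lambda>i. s * F i) k = s * act n act0 h F k"
  unfolding act_def by (simp add: sum_distrib_left mult_ac)

lemma act_cong: "(\<And>a b. a < n \<Longrightarrow> b < n \<Longrightarrow> h a b = h' a b) \<Longrightarrow> (\<And>i. i < n \<Longrightarrow> m i = m' i) \<Longrightarrow> act n act0 h m k = act n act0 h' m' k"
  unfolding act_def by (intro if_cong refl sum.cong) auto

lemma HHt_Hb: "a < n \<Longrightarrow> b < n \<Longrightarrow> a' < n \<Longrightarrow> b' < n \<Longrightarrow>
  HHt n (Hb n a b) (Hb n a' b') c d c' d' = (if c = a \<and> d = b \<and> c' = a' \<and> d' = b' then 1 else 0)"
  by (auto simp: HHt_def Hb_simp)

lemma Hmul_Hb_00: "a < n \<Longrightarrow> b < n \<Longrightarrow> Hmul n w (Hb n a b) (Hb n 0 0) = Hb n a b"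
  by (auto simp: fun_eq_iff Hmul_basis)
lemma Hmul_00_Hb: "a < n \<Longrightarrow> b < n \<Longrightarrow> Hmul n w (Hb n 0 0) (Hb n a b) = Hb n a b"
  by (auto simp: fun_eq_iff Hmul_basis)

lemma sum4_delta0: "0 < (n::nat) \<Longrightarrow> (\<Sum>p<n. \<Sum>q<n. \<Sum>p'<n. \<Sum>q'<n. (if p = 0 \<and> q = 0 \<and> p' = 0 \<and> q' = 0 then F p q p' q' else 0)) = F 0 0 0 0"
  by (subst sum4_single[where a=0 and b=0 and c=0 and d=0]) auto

lemma sum4_delta: "a < (n::nat) \<Longrightarrow> b < n \<Longrightarrow> a' < n \<Longrightarrow> b' < n \<Longrightarrow> (\<Sum>p<n. \<Sum>q<n. \<Sum>p'<n. \<Sum>q'<n. (if p = a \<and> q = b \<and> p' = a' \<and> q' = b' then F p q p' q' else 0)) = F a b a' b'"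
  by (subst sum4_single[where a=a and b=b and c=a' and d=b']) auto

lemma HHt00: "0 < n \<Longrightarrow> p < n \<Longrightarrow> q < n \<Longrightarrow> p' < n \<Longrightarrow> q' < n \<Longrightarrow> HHt n (Hb n 0 0) (Hb n 0 0) p q p' q' = (if p = 0 \<and> q = 0 \<and> p' = 0 \<and> q' = 0 then 1 else 0)"
  by (simp add: HHt_Hb)

lemma HHmul_unit_right: assumes "0 < n"
  shows "HHmul n w X (HHt n (Hb n 0 0) (Hb n 0 0)) c d c' d' = (if c < n \<and> d < n \<and> c' < n \<and> d' < n then X c d c' d' else 0)"
proof -
  have "HHmul n w X (HHt n (Hb n 0 0) (Hb n 0 0)) c d c' d' =
     (\<Sum>a<n. \<Sum>b<n. \<Sum>a'<n. \<Sum>b'<n. X a b a' b' * HHt n (Hb n a b) (Hb n a' b') c d c' d')"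
  proof -
    have "HHmul n w X (HHt n (Hb n 0 0) (Hb n 0 0)) c d c' d' =
     (\<Sum>a<n. \<Sum>b<n. \<Sum>a'<n. \<Sum>b'<n. \<Sum>p<n. \<Sum>q<n. \<Sum>p'<n. \<Sum>q'<n.
       (if p = 0 \<and> q = 0 \<and> p' = 0 \<and> q' = 0 then X a b a' b' * HHt n (Hmul n w (Hb n a b) (Hb n p q)) (Hmul n w (Hb n a' b') (Hb n p' q')) c d c' d' else 0))"
      unfolding HHmul_def using assms by (intro sum.cong refl) (simp add: HHt00)
    also have "\<dots> = (\<Sum>a<n. \<Sum>b<n. \<Sum>a'<n. \<Sum>b'<n. X a b a' b' * HHt n (Hb n a b) (Hb n a' b') c d c' d')"
      using assms by (intro sum.cong refl) (simp only: sum4_delta0, simp add: Hmul_Hb_00)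
    finally show ?thesis .
  qed
  also have "\<dots> = (\<Sum>a<n. \<Sum>b<n. \<Sum>a'<n. \<Sum>b'<n. (if a = c \<and> b = d \<and> a' = c' \<and> b' = d' then X a b a' b' else 0))"
    by (intro sum.cong refl) (auto simp: HHt_Hb)
  also have "\<dots> = (if c < n \<and> d < n \<and> c' < n \<and> d' < n then X c d c' d' else 0)"
    by (auto simp: if_conj0 sum_if_const)
  finally show ?thesis .
qed

lemma HHmul_unit_left: assumes "0 < n"
  shows "HHmul n w (HHt n (Hb n 0 0) (Hb n 0 0)) X c d c' d' = (if c < n \<and> d < n \<and> c' < n \<and> d' < n then X c d c' d' else 0)"
proof -
  have "HHmul n w (HHt n (Hb n 0 0) (Hb n 0 0)) X c d c' d' =
     (\<Sum>a<n. \<Sum>b<n. \<Sum>a'<n. \<Sum>b'<n. \<Sum>p<n. \<Sum>q<n. \<Sum>p'<n. \<Sum>q'<n.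
       (if a = 0 \<and> b = 0 \<and> a' = 0 \<and> b' = 0 then X p q p' q' * HHt n (Hmul n w (Hb n a b) (Hb n p q)) (Hmul n w (Hb n a' b') (Hb n p' q')) c d c' d' else 0))"
    unfolding HHmul_def using assms by (intro sum.cong refl) (simp add: HHt00)
  also have "\<dots> = (\<Sum>p<n. \<Sum>q<n. \<Sum>p'<n. \<Sum>q'<n. X p q p' q' * HHt n (Hb n p q) (Hb n p' q') c d c' d')"
    using assms by (simp only: sum_if_const if_conj0 sum4_delta0[of n "\<lambda>a b a' b'. \<Sum>p<n. \<Sum>q<n. \<Sum>p'<n. \<Sum>q'<n. X p q p' q' * HHt n (Hmul n w (Hb n a b) (Hb n p q)) (Hmul n w (Hb n a' b') (Hb n p' q')) c d c' d'", simplified if_conj0 sum_if_const])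
      (intro sum.cong refl, simp add: Hmul_00_Hb)
  also have "\<dots> = (\<Sum>a<n. \<Sum>b<n. \<Sum>a'<n. \<Sum>b'<n. (if a = c \<and> b = d \<and> a' = c' \<and> b' = d' then X a b a' b' else 0))"
    by (intro sum.cong refl) (auto simp: HHt_Hb)
  also have "\<dots> = (if c < n \<and> d < n \<and> c' < n \<and> d' < n then X c d c' d' else 0)"
    by (auto simp: if_conj0 sum_if_const)
  finally show ?thesis .
qed

lemma HHpow_0: "HHpow n w X 0 = HHt n (Hb n 0 0) (Hb n 0 0)" by (simp add: HHpow_def Hone_def)
lemma HHpow_Suc: "HHpow n w X (Suc k) = HHmul n w X (HHpow n w X k)" by (simp add: HHpow_def)

lemma Delta_Hb: "a < n \<Longrightarrow> b < n \<Longrightarrow> Delta n w (Hb n a b) c d c' d' = HHmul n w (HHpow n w (Dg n) a) (HHpow n w (Dx n) b) c d c' d'"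
  by (simp add: Delta_def Hb_simp collapse cong: if_cong)


definition qint :: "'k::field \<Rightarrow> nat \<Rightarrow> 'k" where "qint w i = (\<Sum>j<i. w ^ j)"

lemma qint_Suc: "qint w (Suc i) = 1 + w * qint w i"
  unfolding qint_def sum.lessThan_Suc_shift by (simp add: sum_distrib_left)

locale YD =
  fixes n :: nat and w :: "'k::field" and act0 :: "nat \<Rightarrow> nat \<Rightarrow> nat \<Rightarrow> 'k Ael"
  assumes n2: "2 \<le> n" and prim: "primitive_root n w" and MA: "is_module_algebra n w act0"
    and gu: "act n act0 (Hg n) (Au n) = (\<lambda>k. w * Au n k)" and xu: "act n act0 (Hx n) (Au n) = Aone n"
begin

abbreviation "ACT \<equiv> act n act0"

lemma npos: "0 < n" using n2 by simp
lemma wn: "w ^ n = 1" using prim by (simp add: primitive_root_def)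
lemma w0: "w \<noteq> 0" using wn npos by (cases "w = 0") (auto simp: zero_power)
lemma w1: "w \<noteq> 1"
proof -
  have "w ^ 1 \<noteq> 1" using prim n2 unfolding primitive_root_def by auto
  then show ?thesis by simp
qed

lemma act_comp: "ACT (Hmul n w h h') m = ACT h (ACT h' m)"
  using MA by (simp add: is_module_algebra_def)

lemma act_one: "ACT (Hb n 0 0) m k = (if k < n then m k else 0)"
  using MA by (simp add: is_module_algebra_def Hone_def)

lemma Leib: "ACT h (Amul n w m m') k = (\<Sum>a<n. \<Sum>b<n. \<Sum>a'<n. \<Sum>b'<n. Delta n w h a b a' b' *
             Amul n w (ACT (Hb n a b) m) (ACT (Hb n a' b') m') k)"
  using MA by (simp add: is_module_algebra_def)

lemma act_unit: "ACT h (Ae n 0) k = Heps n h * Ae n 0 k"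
  using MA by (simp add: is_module_algebra_def Aone_def)

lemma HH_supp: "HHmul n w X (HHt n (Hb n 0 0) (Hb n 0 0)) = X" "HHmul n w (HHt n (Hb n 0 0) (Hb n 0 0)) X = X"
  if "\<And>c d c' d'. \<not> (c < n \<and> d < n \<and> c' < n \<and> d' < n) \<Longrightarrow> X c d c' d' = 0"
  using that by (auto simp: fun_eq_iff HHmul_unit_right HHmul_unit_left npos)

lemma Delta_g: "Delta n w (Hb n 1 0) c d c' d' = HHt n (Hb n 1 0) (Hb n 1 0) c d c' d'"
proof -
  have s: "\<And>c d c' d'. \<not> (c < n \<and> d < n \<and> c' < n \<and> d' < n) \<Longrightarrow> Dg n c d c' d' = (0::'k)"
    by (auto simp: Dg_def HHt_def)
  have d1: "HHmul n w (Dg n) (HHt n (Hb n 0 0) (Hb n 0 0)) = Dg n" by (rule HH_supp(1)[OF s])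
  have "Delta n w (Hb n 1 0) c d c' d' = HHmul n w (HHpow n w (Dg n) 1) (HHpow n w (Dx n) 0) c d c' d'"
    using n2 by (intro Delta_Hb) auto
  also have "\<dots> = Dg n c d c' d'" by (simp only: One_nat_def HHpow_Suc HHpow_0 d1)
  finally show ?thesis by (simp add: Dg_def Hg_def)
qed

lemma Delta_x: "Delta n w (Hb n 0 1) c d c' d' = Dx n c d c' d'"
proof -
  have s: "\<And>c d c' d'. \<not> (c < n \<and> d < n \<and> c' < n \<and> d' < n) \<Longrightarrow> Dx n c d c' d' = (0::'k)"
    by (auto simp: Dx_def HHt_def)
  have d1: "HHmul n w (Dx n) (HHt n (Hb n 0 0) (Hb n 0 0)) = Dx n" by (rule HH_supp(1)[OF s])
  have d2: "HHmul n w (HHt n (Hb n 0 0) (Hb n 0 0)) (Dx n) = Dx n" by (rule HH_supp(2)[OF s])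
  have "Delta n w (Hb n 0 1) c d c' d' = HHmul n w (HHpow n w (Dg n) 0) (HHpow n w (Dx n) 1) c d c' d'"
    using n2 by (intro Delta_Hb) auto
  also have "\<dots> = Dx n c d c' d'" by (simp only: One_nat_def HHpow_Suc HHpow_0 d1 d2)
  finally show ?thesis .
qed

lemma Leib_g: "ACT (Hb n 1 0) (Amul n w m m') k = Amul n w (ACT (Hb n 1 0) m) (ACT (Hb n 1 0) m') k"
proof -
  have "ACT (Hb n 1 0) (Amul n w m m') k = (\<Sum>a<n. \<Sum>b<n. \<Sum>a'<n. \<Sum>b'<n. HHt n (Hb n 1 0) (Hb n 1 0) a b a' b' *
             Amul n w (ACT (Hb n a b) m) (ACT (Hb n a' b') m') k)"
    unfolding Leib by (intro sum.cong refl) (simp only: Delta_g)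
  also have "\<dots> = Amul n w (ACT (Hb n 1 0) m) (ACT (Hb n 1 0) m') k"
    using n2 by (subst sum4_single[where a=1 and b=0 and c=1 and d=0]) (auto simp: HHt_Hb)
  finally show ?thesis .
qed

lemma Leib_x: "ACT (Hb n 0 1) (Amul n w m m') k = Amul n w (ACT (Hb n 0 1) m) m' k + Amul n w (ACT (Hb n 1 0) m) (ACT (Hb n 0 1) m') k"
proof -
  have "ACT (Hb n 0 1) (Amul n w m m') k = (\<Sum>a<n. \<Sum>b<n. \<Sum>a'<n. \<Sum>b'<n. HHt n (Hb n 0 1) (Hb n 0 0) a b a' b' *
             Amul n w (ACT (Hb n a b) m) (ACT (Hb n a' b') m') k) + (\<Sum>a<n. \<Sum>b<n. \<Sum>a'<n. \<Sum>b'<n. HHt n (Hb n 1 0) (Hb n 0 1) a b a' b' *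
             Amul n w (ACT (Hb n a b) m) (ACT (Hb n a' b') m') k)"
    unfolding Leib by (simp only: Delta_x Dx_def Hx_def Hg_def Hone_def distrib_right sum.distrib)
  also have "\<dots> = Amul n w (ACT (Hb n 0 1) m) (ACT (Hb n 0 0) m') k + Amul n w (ACT (Hb n 1 0) m) (ACT (Hb n 0 1) m') k"
  proof -
    have "(\<Sum>a<n. \<Sum>b<n. \<Sum>a'<n. \<Sum>b'<n. HHt n (Hb n 0 1) (Hb n 0 0) a b a' b' *
             Amul n w (ACT (Hb n a b) m) (ACT (Hb n a' b') m') k) = Amul n w (ACT (Hb n 0 1) m) (ACT (Hb n 0 0) m') k"
      using n2 by (subst sum4_single[where a=0 and b=1 and c=0 and d=0]) (auto simp: HHt_Hb)
    moreover have "(\<Sum>a<n. \<Sum>b<n. \<Sum>a'<n. \<Sum>b'<n. HHt n (Hb n 1 0) (Hb n 0 1) a b a' b' *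
             Amul n w (ACT (Hb n a b) m) (ACT (Hb n a' b') m') k) = Amul n w (ACT (Hb n 1 0) m) (ACT (Hb n 0 1) m') k"
      using n2 by (subst sum4_single[where a=1 and b=0 and c=0 and d=1]) (auto simp: HHt_Hb)
    ultimately show ?thesis by simp
  qed
  also have "Amul n w (ACT (Hb n 0 1) m) (ACT (Hb n 0 0) m') k = Amul n w (ACT (Hb n 0 1) m) m' k"
    by (rule Amul_cong) (simp_all add: act_one)
  finally show ?thesis .
qed

lemma Ae_Suc: "Suc i < n \<Longrightarrow> Ae n (Suc i) = Amul n w (Ae n 1) (Ae n i)"
  by (auto simp: fun_eq_iff Amul_basis)

lemma act_g_u: "ACT (Hb n 1 0) (Ae n 1) = (\<lambda>k. w * Ae n 1 k)"
  using gu by (simp add: Hg_def Au_def)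
lemma act_x_u: "ACT (Hb n 0 1) (Ae n 1) = Ae n 0"
  using xu by (simp add: Hx_def Au_def Aone_def)

lemma act_g_Ae: "i < n \<Longrightarrow> ACT (Hb n 1 0) (Ae n i) = (\<lambda>k. w ^ i * Ae n i k)"
proof (induction i)
  case 0 show ?case using n2 by (simp add: fun_eq_iff act_unit Heps_Hb)
next
  case (Suc i)
  then have IH: "ACT (Hb n 1 0) (Ae n i) = (\<lambda>k. w ^ i * Ae n i k)" by simp
  have "ACT (Hb n 1 0) (Ae n (Suc i)) k = w ^ Suc i * Ae n (Suc i) k" for k
  proof -
    have "ACT (Hb n 1 0) (Ae n (Suc i)) k = ACT (Hb n 1 0) (Amul n w (Ae n 1) (Ae n i)) k" by (simp only: Ae_Suc[OF Suc.prems])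
    also have "\<dots> = Amul n w (ACT (Hb n 1 0) (Ae n 1)) (ACT (Hb n 1 0) (Ae n i)) k" by (rule Leib_g)
    also have "\<dots> = Amul n w (\<lambda>k. w * Ae n 1 k) (\<lambda>k. w^i * Ae n i k) k" by (simp only: act_g_u IH)
    also have "\<dots> = w * w^i * Amul n w (Ae n 1) (Ae n i) k" by (simp add: Amul_scal_left Amul_scal_right)
    also have "\<dots> = w ^ Suc i * Ae n (Suc i) k" by (simp only: Ae_Suc[OF Suc.prems] power_Suc)
    finally show ?thesis .
  qed
  then show ?case by auto
qed

lemma act_x_Ae: "i < n \<Longrightarrow> ACT (Hb n 0 1) (Ae n i) = (\<lambda>k. qint w i * Ae n (i - 1) k)"
proof (induction i)
  case 0 show ?case using n2 by (simp add: fun_eq_iff act_unit Heps_Hb qint_def)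
next
  case (Suc i)
  then have IH: "ACT (Hb n 0 1) (Ae n i) = (\<lambda>k. qint w i * Ae n (i - 1) k)" by simp
  have gi: "ACT (Hb n 1 0) (Ae n 1) = (\<lambda>k. w * Ae n 1 k)" by (rule act_g_u)
  have A: "Amul n w (Ae n 0) (Ae n i) k = Ae n i k" for k using npos by (simp add: Amul_unit_left Ae_simp)
  have B: "qint w i * Amul n w (Ae n 1) (Ae n (i - 1)) k = qint w i * Ae n i k" for k
  proof (cases i)
    case 0 then show ?thesis by (simp add: qint_def)
  next
    case (Suc j)
    then have "Suc j < n" using Suc.prems by simp
    show ?thesis unfolding Suc diff_Suc_1 Ae_Suc[OF \<open>Suc j < n\<close>, symmetric] ..
  qed
  have "ACT (Hb n 0 1) (Ae n (Suc i)) k = qint w (Suc i) * Ae n i k" for k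
  proof -
    have "ACT (Hb n 0 1) (Ae n (Suc i)) k = ACT (Hb n 0 1) (Amul n w (Ae n 1) (Ae n i)) k" by (simp only: Ae_Suc[OF Suc.prems])
    also have "\<dots> = Amul n w (ACT (Hb n 0 1) (Ae n 1)) (Ae n i) k + Amul n w (ACT (Hb n 1 0) (Ae n 1)) (ACT (Hb n 0 1) (Ae n i)) k" by (rule Leib_x)
    also have "\<dots> = Amul n w (Ae n 0) (Ae n i) k + Amul n w (\<lambda>k. w * Ae n 1 k) (\<lambda>k. qint w i * Ae n (i - 1) k) k" by (simp only: act_x_u gi IH)
    also have "\<dots> = Ae n i k + w * (qint w i * Amul n w (Ae n 1) (Ae n (i - 1)) k)" by (simp only: A Amul_scal_left Amul_scal_right)
    also have "\<dots> = qint w (Suc i) * Ae n i k" by (simp only: B) (simp add: qint_Suc algebra_simps)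
    finally show ?thesis .
  qed
  then show ?case by auto
qed

end


definition I3 :: "nat \<Rightarrow> (nat \<times> nat \<times> nat) set" where "I3 n = {..<n} \<times> {..<n} \<times> {..<n}"
fun m3 :: "nat \<Rightarrow> nat \<times> nat \<times> nat \<Rightarrow> nat \<times> nat \<times> nat \<Rightarrow> nat \<times> nat \<times> nat" where
  "m3 n (a,b,i) (a',b',i') = ((a+a') mod n, b+b', (i+i') mod n)"
fun c3 :: "nat \<Rightarrow> 'k::field \<Rightarrow> nat \<times> nat \<times> nat \<Rightarrow> nat \<times> nat \<times> nat \<Rightarrow> 'k" where
  "c3 n w (a,b,i) (a',b',i') = (if b + b' < n then w^(b*a') * (if i + i' < n then 1 else w) else 0)"

lemma mod_2n: "(x::nat) < 2 * n \<Longrightarrow> x mod n = (if x < n then x else x - n)"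
  by (simp add: mod_if le_mod_geq)

lemma HAt_basis:
  assumes "a < n" "b < n" "i < n" "a' < n" "b' < n" "i' < n"
  shows "HAt n (Hmul n w (Hb n a b) (Hb n a' b')) (Amul n w (Ae n i) (Ae n i')) c d k
     = c3 n w (a,b,i) (a',b',i') * (if m3 n (a,b,i) (a',b',i') = (c,d,k) then 1 else 0)"
proof -
  have im: "(i + i') mod n = (if i + i' < n then i + i' else i + i' - n)"
    using assms by (intro mod_2n) auto
  have am: "(a + a') mod n < n" using assms by simp
  show ?thesis using assms am
    by (simp only: HAt_def Hmul_basis[OF assms(1,2,4,5)] Amul_basis[OF assms(3,6)] im) (auto simp: Hb_def Ae_simp im)
qed

lemma HAmul_gm: "HAmul n w T S c d k = gm (I3 n) (m3 n) (c3 n w) (\<lambda>(a,b,i). T a b i) (\<lambda>(a,b,i). S a b i) (c,d,k)"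
  unfolding HAmul_def gm_def I3_def sum.cartesian_product'
  by (intro sum.cong refl) (auto simp: HAt_basis mult.assoc)

context
  fixes n :: nat and w :: "'k::field"
  assumes wn: "w ^ n = 1" and npos: "0 < n"
begin

lemma W_assoc:
  assumes "i < n" "i' < n" "i'' < n"
  shows "(if i + i' < n then 1 else w) * (if (i + i') mod n + i'' < n then 1 else w)
       = (if i' + i'' < n then 1 else w) * (if i + (i' + i'') mod n < n then 1 else (w::'k))"
proof -
  have 1: "(i + i') mod n = (if i + i' < n then i + i' else i + i' - n)"
    using assms by (intro mod_2n) auto
  have 2: "(i' + i'') mod n = (if i' + i'' < n then i' + i'' else i' + i'' - n)"
    using assms by (intro mod_2n) auto
  show ?thesis unfolding 1 2 using assms by auto
qed

lemma I3_props:
  shows "finite (I3 n)"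
    and "\<And>s t. s \<in> I3 n \<Longrightarrow> t \<in> I3 n \<Longrightarrow> c3 n w s t \<noteq> 0 \<Longrightarrow> m3 n s t \<in> I3 n"
    and "\<And>s t r. s \<in> I3 n \<Longrightarrow> t \<in> I3 n \<Longrightarrow> r \<in> I3 n \<Longrightarrow> c3 n w s t * c3 n w (m3 n s t) r = c3 n w t r * c3 n w s (m3 n t r)"
    and "\<And>s t r. s \<in> I3 n \<Longrightarrow> t \<in> I3 n \<Longrightarrow> r \<in> I3 n \<Longrightarrow> c3 n w s t * c3 n w (m3 n s t) r \<noteq> 0 \<Longrightarrow> m3 n (m3 n s t) r = m3 n s (m3 n t r)"
proof -
  show "finite (I3 n)" by (simp add: I3_def)
  show "\<And>s t. s \<in> I3 n \<Longrightarrow> t \<in> I3 n \<Longrightarrow> c3 n w s t \<noteq> 0 \<Longrightarrow> m3 n s t \<in> I3 n"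
    using npos by (auto simp: I3_def split: if_splits)
  show "m3 n (m3 n s t) r = m3 n s (m3 n t r)" for s t r
    by (cases s; cases t; cases r) (simp add: mod_add_left_eq mod_add_right_eq add.assoc)
  fix s t r assume st: "s \<in> I3 n" "t \<in> I3 n" "r \<in> I3 n"
  obtain a b i where s: "s = (a,b,i)" by (cases s)
  obtain a' b' i' where t: "t = (a',b',i')" by (cases t)
  obtain a'' b'' i'' where r: "r = (a'',b'',i'')" by (cases r)
  have e: "w ^ (b * ((a' + a'') mod n)) = w ^ (b * (a' + a''))"
    by (metis mod_mult_right_eq pow_mod_n wn)
  have W: "(if i + i' < n then 1 else w) * (if (i + i') mod n + i'' < n then 1 else w)
       = (if i' + i'' < n then 1 else w) * (if i + (i' + i'') mod n < n then 1 else (w::'k))"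
    using st s t r by (intro W_assoc) (auto simp: I3_def)
  have P: "w ^ (b * a') * w ^ ((b + b') * a'') = w ^ (b' * a'') * w ^ (b * (a' + a''))"
    by (simp add: power_add[symmetric] algebra_simps)
  show "c3 n w s t * c3 n w (m3 n s t) r = c3 n w t r * c3 n w s (m3 n t r)"
  proof (cases "b + b' + b'' < n")
    case True
    then have "c3 n w s t * c3 n w (m3 n s t) r = (w ^ (b * a') * w ^ ((b + b') * a'')) *
       ((if i + i' < n then 1 else w) * (if (i + i') mod n + i'' < n then 1 else w))"
      unfolding s t r by (simp add: mult_ac)
    also have "\<dots> = (w ^ (b' * a'') * w ^ (b * (a' + a''))) * ((if i' + i'' < n then 1 else w) * (if i + (i' + i'') mod n < n then 1 else w))"
      unfolding P W ..
    also have "\<dots> = c3 n w t r * c3 n w s (m3 n t r)"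
      unfolding s t r using True e by (simp add: mult_ac)
    finally show ?thesis .
  next
    case False
    then show ?thesis unfolding s t r by (auto simp: add.assoc)
  qed
qed

lemma HAmul_assoc: "HAmul n w (HAmul n w T S) R c d k = HAmul n w T (HAmul n w S R) c d k"
proof -
  have 1: "(\<lambda>(a,b,i). HAmul n w T S a b i) = gm (I3 n) (m3 n) (c3 n w) (\<lambda>(a,b,i). T a b i) (\<lambda>(a,b,i). S a b i)"
    by (auto simp: HAmul_gm)
  have 2: "(\<lambda>(a,b,i). HAmul n w S R a b i) = gm (I3 n) (m3 n) (c3 n w) (\<lambda>(a,b,i). S a b i) (\<lambda>(a,b,i). R a b i)"
    by (auto simp: HAmul_gm)
  show ?thesis unfolding HAmul_gm[of n w _ _ c d k] 1 2
    by (rule gm_assoc[OF I3_props])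
qed

end

lemma HAmul_sum_left: "HAmul n w (\<lambda>a b i. \<Sum>j\<in>J. F j a b i) S c d k = (\<Sum>j\<in>J. HAmul n w (F j) S c d k)"
proof -
  have "(\<lambda>(a,b,i). \<Sum>j\<in>J. F j a b i) = (\<lambda>s. \<Sum>j\<in>J. (\<lambda>(a,b,i). F j a b i) s)" by auto
  then show ?thesis unfolding HAmul_gm by (simp add: gm_sum_left)
qed
lemma HAmul_sum_right: "HAmul n w T (\<lambda>a b i. \<Sum>j\<in>J. F j a b i) c d k = (\<Sum>j\<in>J. HAmul n w T (F j) c d k)"
proof -
  have "(\<lambda>(a,b,i). \<Sum>j\<in>J. F j a b i) = (\<lambda>s. \<Sum>j\<in>J. (\<lambda>(a,b,i). F j a b i) s)" by auto
  then show ?thesis unfolding HAmul_gm by (simp add: gm_sum_right)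
qed
lemma HAmul_scal_left: "HAmul n w (\<lambda>a b i. s * F a b i) S c d k = s * HAmul n w F S c d k"
proof -
  have "(\<lambda>(a,b,i). s * F a b i) = (\<lambda>x. s * (\<lambda>(a,b,i). F a b i) x)" by auto
  then show ?thesis unfolding HAmul_gm by (simp add: gm_scal_left)
qed
lemma HAmul_scal_right: "HAmul n w T (\<lambda>a b i. s * F a b i) c d k = s * HAmul n w T F c d k"
proof -
  have "(\<lambda>(a,b,i). s * F a b i) = (\<lambda>x. s * (\<lambda>(a,b,i). F a b i) x)" by auto
  then show ?thesis unfolding HAmul_gm by (simp add: gm_scal_right)
qed
lemma HAmul_add_left: "HAmul n w (\<lambda>a b i. F a b i + G a b i) S c d k = HAmul n w F S c d k + HAmul n w G S c d k"
proof -
  have "(\<lambda>(a,b,i). F a b i + G a b i) = (\<lambda>x. (\<lambda>(a,b,i). F a b i) x + (\<lambda>(a,b,i). G a b i) x)" by auto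
  then show ?thesis unfolding HAmul_gm by (simp add: gm_add_left)
qed
lemma HAmul_add_right: "HAmul n w T (\<lambda>a b i. F a b i + G a b i) c d k = HAmul n w T F c d k + HAmul n w T G c d k"
proof -
  have "(\<lambda>(a,b,i). F a b i + G a b i) = (\<lambda>x. (\<lambda>(a,b,i). F a b i) x + (\<lambda>(a,b,i). G a b i) x)" by auto
  then show ?thesis unfolding HAmul_gm by (simp add: gm_add_right)
qed
lemma HAmul_cong: "(\<And>a b i. a < n \<Longrightarrow> b < n \<Longrightarrow> i < n \<Longrightarrow> T a b i = T' a b i) \<Longrightarrow> (\<And>a b i. a < n \<Longrightarrow> b < n \<Longrightarrow> i < n \<Longrightarrow> S a b i = S' a b i)
  \<Longrightarrow> HAmul n w T S c d k = HAmul n w T' S' c d k"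
  unfolding HAmul_def by (intro sum.cong refl) auto
lemma HAmul_out: "\<not> (c < n \<and> d < n \<and> k < n) \<Longrightarrow> HAmul n w T S c d k = 0"
  unfolding HAmul_def by (auto simp: HAt_def)

lemma Hmul_expand2: "Hmul n w f h c d = (\<Sum>a<n. \<Sum>b<n. \<Sum>a'<n. \<Sum>b'<n. f a b * h a' b' * Hmul n w (Hb n a b) (Hb n a' b') c d)"
proof (cases "c < n \<and> d < n")
  case True
  have "(\<Sum>a<n. \<Sum>b<n. \<Sum>a'<n. \<Sum>b'<n. f a b * h a' b' * Hmul n w (Hb n a b) (Hb n a' b') c d)
     = (\<Sum>a<n. \<Sum>b<n. \<Sum>a'<n. \<Sum>b'<n. f a b * h a' b' * w ^ (b * a') * Hb n (a + a') (b + b') c d)"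
    by (intro sum.cong refl) (simp add: Hmul_basis mult.assoc)
  then show ?thesis using True by (simp add: Hmul_def)
qed (simp add: Hmul_zero_out)

lemma Amul_expand2: "Amul n w m m' k = (\<Sum>i<n. \<Sum>j<n. m i * m' j * Amul n w (Ae n i) (Ae n j) k)"
proof (cases "k < n")
  case True
  have "(\<Sum>i<n. \<Sum>j<n. m i * m' j * Amul n w (Ae n i) (Ae n j) k)
     = (\<Sum>i<n. \<Sum>j<n. m i * m' j * (if i + j < n then (if k = i + j then 1 else 0) else (if k = i + j - n then w else 0)))"
    using True by (intro sum.cong refl) (auto simp: Amul_basis Ae_simp)
  then show ?thesis using True by (simp add: Amul_def)
qed (simp add: Amul_out)

lemma HAmul_tensor: "HAmul n w (HAt n f m) (HAt n f' m') c d k = HAt n (Hmul n w f f') (Amul n w m m') c d k"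
proof (cases "c < n \<and> d < n \<and> k < n")
  case True
  have "HAmul n w (HAt n f m) (HAt n f' m') c d k =
    (\<Sum>a<n. \<Sum>b<n. \<Sum>i<n. \<Sum>a'<n. \<Sum>b'<n. \<Sum>i'<n. (f a b * f' a' b' * Hmul n w (Hb n a b) (Hb n a' b') c d) * (m i * m' i' * Amul n w (Ae n i) (Ae n i') k))"
    unfolding HAmul_def using True by (intro sum.cong refl) (simp add: HAt_def mult_ac)
  also have "\<dots> = (\<Sum>a<n. \<Sum>b<n. \<Sum>a'<n. \<Sum>b'<n. \<Sum>i<n. \<Sum>i'<n. (f a b * f' a' b' * Hmul n w (Hb n a b) (Hb n a' b') c d) * (m i * m' i' * Amul n w (Ae n i) (Ae n i') k))"
    by (rule sum.cong[OF refl], rule sum.cong[OF refl], rule sum_reorder3)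
  also have "\<dots> = Hmul n w f f' c d * Amul n w m m' k"
    unfolding Hmul_expand2[of n w f f' c d] Amul_expand2[of n w m m' k] by (simp only: sum_distrib_right) (simp only: sum_distrib_left)
  finally show ?thesis using True by (simp add: HAt_def)
qed (auto simp: HAmul_out HAt_def)


abbreviation "One n \<equiv> HAt n (Hb n 0 0) (Ae n 0)"

lemma HAmul_one_left: "0 < n \<Longrightarrow> HAmul n w (One n) T c d k = (if c < n \<and> d < n \<and> k < n then T c d k else 0)"
  unfolding HAmul_gm
  by (subst gm_unit_left[where e="(0,0,0)"]) (auto simp: I3_def HAt_def Hb_def Ae_simp split: if_splits)

lemma HAmul_one_right: "0 < n \<Longrightarrow> HAmul n w T (One n) c d k = (if c < n \<and> d < n \<and> k < n then T c d k else 0)"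
  unfolding HAmul_gm
  by (subst gm_unit_right[where e="(0,0,0)"]) (auto simp: I3_def HAt_def Hb_def Ae_simp split: if_splits)

definition supp3 :: "nat \<Rightarrow> (nat \<Rightarrow> nat \<Rightarrow> nat \<Rightarrow> 'k::zero) \<Rightarrow> bool" where
  "supp3 n T \<longleftrightarrow> (\<forall>c d k. \<not> (c < n \<and> d < n \<and> k < n) \<longrightarrow> T c d k = 0)"

lemma supp3_HAmul: "supp3 n (HAmul n w T S)" by (simp add: supp3_def HAmul_out)
lemma supp3_HAt: "supp3 n (HAt n f m)" by (simp add: supp3_def HAt_def)

lemma HAmul_one_left_f: "0 < n \<Longrightarrow> supp3 n T \<Longrightarrow> HAmul n w (One n) T = T"
  by (auto simp: fun_eq_iff HAmul_one_left supp3_def)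
lemma HAmul_one_right_f: "0 < n \<Longrightarrow> supp3 n T \<Longrightarrow> HAmul n w T (One n) = T"
  by (auto simp: fun_eq_iff HAmul_one_right supp3_def)

lemma HAmul_scal_left_f: "HAmul n w (\<lambda>a b i. s * F a b i) S = (\<lambda>c d k. s * HAmul n w F S c d k)"
  by (simp add: fun_eq_iff HAmul_scal_left)
lemma HAmul_scal_right_f: "HAmul n w T (\<lambda>a b i. s * F a b i) = (\<lambda>c d k. s * HAmul n w T F c d k)"
  by (simp add: fun_eq_iff HAmul_scal_right)
lemma HAmul_add_left_f: "HAmul n w (\<lambda>a b i. F a b i + G a b i) S = (\<lambda>c d k. HAmul n w F S c d k + HAmul n w G S c d k)"
  by (simp add: fun_eq_iff HAmul_add_left)
lemma HAmul_add_right_f: "HAmul n w T (\<lambda>a b i. F a b i + G a b i) = (\<lambda>c d k. HAmul n w T F c d k + HAmul n w T G c d k)"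
  by (simp add: fun_eq_iff HAmul_add_right)
lemma HAmul_tensor_f: "HAmul n w (HAt n f m) (HAt n f' m') = HAt n (Hmul n w f f') (Amul n w m m')"
  by (simp add: fun_eq_iff HAmul_tensor)

lemma HAt_cong: "(\<And>c d. c < n \<Longrightarrow> d < n \<Longrightarrow> f c d = f' c d) \<Longrightarrow> (\<And>k. k < n \<Longrightarrow> m k = m' k) \<Longrightarrow> HAt n f m = HAt n f' m'"
  by (auto simp: fun_eq_iff HAt_def)

lemma HAt_scal_left: "HAt n (\<lambda>c d. s * f c d) m = (\<lambda>a b i. s * HAt n f m a b i)"
  by (auto simp: fun_eq_iff HAt_def)
lemma HAt_scal_right: "HAt n f (\<lambda>k. s * m k) = (\<lambda>a b i. s * HAt n f m a b i)"
  by (auto simp: fun_eq_iff HAt_def)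

lemma HApow_0: "HApow n w T 0 = One n" by (simp add: HApow_def Hone_def Aone_def)
lemma HApow_Suc: "HApow n w T (Suc i) = HAmul n w T (HApow n w T i)" by (simp add: HApow_def)
lemma supp3_HApow: "supp3 n (HApow n w T i)"
  by (cases i) (simp_all add: HApow_0 HApow_Suc supp3_HAt supp3_HAmul)

lemma rho_Ae: "i < n \<Longrightarrow> rho n w (Ae n i) = HApow n w (rho_u n w) i"
  by (auto simp: fun_eq_iff rho_def Ae_simp collapse cong: if_cong)

context YD begin

lemma wn': "w ^ n = 1" by (rule wn)

definition AA :: "'k Hel \<Rightarrow> 'k HAel \<Rightarrow> 'k HAel" where
  "AA h T = (\<lambda>c d k. \<Sum>p<n. \<Sum>q<n. \<Sum>i<n. T p q i * HAt n (Hb n p q) (ACT h (Ae n i)) c d k)"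

lemma AA_HAt: "AA h (HAt n F M) = HAt n F (ACT h M)"
proof (intro ext)
  fix c d k
  show "AA h (HAt n F M) c d k = HAt n F (ACT h M) c d k"
  proof (cases "c < n \<and> d < n \<and> k < n")
    case True
    have "HAt n F (ACT h M) c d k = (\<Sum>p<n. \<Sum>q<n. F p q * Hb n p q c d) * (\<Sum>i<n. M i * ACT h (Ae n i) k)"
      using True by (simp add: HAt_def Hb_expand act_lin_m[of n act0 h M k])
    also have "\<dots> = AA h (HAt n F M) c d k"
      unfolding AA_def using True
      by (simp only: sum_distrib_right, simp only: sum_distrib_left, intro sum.cong refl) (simp add: HAt_def mult_ac)
    finally show ?thesis ..
  qed (auto simp: AA_def HAt_def)
qed

lemma AA_sum: "AA h (\<lambda>a b i. \<Sum>j\<in>J. G j a b i) = (\<lambda>c d k. \<Sum>j\<in>J. AA h (G j) c d k)"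
  unfolding AA_def by (simp add: fun_eq_iff sum_distrib_right sum.swap[where B=J])
lemma AA_scal: "AA h (\<lambda>a b i. s * G a b i) = (\<lambda>c d k. s * AA h G c d k)"
  unfolding AA_def by (simp add: fun_eq_iff sum_distrib_left mult_ac)
lemma AA_add: "AA h (\<lambda>a b i. F a b i + G a b i) = (\<lambda>c d k. AA h F c d k + AA h G c d k)"
  unfolding AA_def by (simp add: fun_eq_iff distrib_right sum.distrib)
lemma AA_cong: "(\<And>a b i. a < n \<Longrightarrow> b < n \<Longrightarrow> i < n \<Longrightarrow> T a b i = T' a b i) \<Longrightarrow> AA h T = AA h T'"
  unfolding AA_def by (intro ext sum.cong refl) auto
lemma supp3_AA: "supp3 n (AA h T)"
  unfolding supp3_def AA_def HAt_def by (intro allI impI sum.neutral ballI) auto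

lemma HA_expand: "supp3 n T \<Longrightarrow> (\<lambda>c d k. \<Sum>p<n. \<Sum>q<n. \<Sum>i<n. T p q i * HAt n (Hb n p q) (Ae n i) c d k) = T"
  by (auto simp: fun_eq_iff supp3_def HAt_def Hb_simp Ae_simp collapse cong: if_cong)

lemma HAmul_unfold: "HAmul n w T S = (\<lambda>c d k. \<Sum>a<n. \<Sum>b<n. \<Sum>i<n. \<Sum>a'<n. \<Sum>b'<n. \<Sum>i'<n.
       T a b i * S a' b' i' * HAt n (Hmul n w (Hb n a b) (Hb n a' b')) (Amul n w (Ae n i) (Ae n i')) c d k)"
  by (simp add: HAmul_def fun_eq_iff)

lemma AA_HAmul: "AA h (HAmul n w T S) = (\<lambda>c d k. \<Sum>a<n. \<Sum>b<n. \<Sum>i<n. \<Sum>a'<n. \<Sum>b'<n. \<Sum>i'<n.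
       T a b i * S a' b' i' * HAt n (Hmul n w (Hb n a b) (Hb n a' b')) (ACT h (Amul n w (Ae n i) (Ae n i'))) c d k)"
  unfolding HAmul_unfold by (simp add: AA_sum AA_scal AA_HAt)

lemma HAmul_AA: "HAmul n w (AA h T) (AA h' S) = (\<lambda>c d k. \<Sum>a<n. \<Sum>b<n. \<Sum>i<n. \<Sum>a'<n. \<Sum>b'<n. \<Sum>i'<n.
       T a b i * S a' b' i' * HAt n (Hmul n w (Hb n a b) (Hb n a' b')) (Amul n w (ACT h (Ae n i)) (ACT h' (Ae n i'))) c d k)"
  unfolding AA_def by (simp add: fun_eq_iff HAmul_sum_left HAmul_sum_right HAmul_scal_left HAmul_scal_right HAmul_tensor sum_distrib_left mult_ac)

lemma AA_mul_g: "AA (Hb n 1 0) (HAmul n w T S) = HAmul n w (AA (Hb n 1 0) T) (AA (Hb n 1 0) S)"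
proof -
  have "ACT (Hb n 1 0) (Amul n w (Ae n i) (Ae n i')) = Amul n w (ACT (Hb n 1 0) (Ae n i)) (ACT (Hb n 1 0) (Ae n i'))" for i i'
    by (rule ext) (rule Leib_g)
  then show ?thesis unfolding AA_HAmul HAmul_AA by simp
qed

lemma HAt_add: "HAt n F (\<lambda>k. A k + B k) = (\<lambda>a b i. HAt n F A a b i + HAt n F B a b i)"
  by (auto simp: fun_eq_iff HAt_def distrib_left)

lemma AA_one: "a < n \<Longrightarrow> b < n \<Longrightarrow> i < n \<Longrightarrow> AA (Hb n 0 0) S a b i = S a b i"
  by (auto simp: AA_def act_one HAt_def Hb_simp Ae_simp collapse cong: if_cong)

lemma AA_mul_x: "AA (Hb n 0 1) (HAmul n w T S) = (\<lambda>c d k. HAmul n w (AA (Hb n 0 1) T) S c d k + HAmul n w (AA (Hb n 1 0) T) (AA (Hb n 0 1) S) c d k)"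
proof -
  have e: "ACT (Hb n 0 1) (Amul n w (Ae n i) (Ae n i')) = (\<lambda>k. Amul n w (ACT (Hb n 0 1) (Ae n i)) (ACT (Hb n 0 0) (Ae n i')) k + Amul n w (ACT (Hb n 1 0) (Ae n i)) (ACT (Hb n 0 1) (Ae n i')) k)" for i i'
  proof (rule ext)
    fix k
    have "Amul n w (ACT (Hb n 0 1) (Ae n i)) (Ae n i') k = Amul n w (ACT (Hb n 0 1) (Ae n i)) (ACT (Hb n 0 0) (Ae n i')) k"
      by (rule Amul_cong) (simp_all add: act_one)
    then show "ACT (Hb n 0 1) (Amul n w (Ae n i) (Ae n i')) k = Amul n w (ACT (Hb n 0 1) (Ae n i)) (ACT (Hb n 0 0) (Ae n i')) k + Amul n w (ACT (Hb n 1 0) (Ae n i)) (ACT (Hb n 0 1) (Ae n i')) k"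
      by (simp only: Leib_x)
  qed
  have 1: "HAmul n w (AA (Hb n 0 1) T) S = HAmul n w (AA (Hb n 0 1) T) (AA (Hb n 0 0) S)"
    by (intro ext HAmul_cong refl) (simp add: AA_one)
  show ?thesis unfolding 1 AA_HAmul HAmul_AA e HAt_add
    by (simp add: fun_eq_iff distrib_left sum.distrib)
qed

end


lemma arith_aux: "0 < (n::nat) \<Longrightarrow> 1 + (n - 1) * (Suc j + 1) = (n - 1) * (j + 1) + n"
  by (cases n) (simp_all add: algebra_simps)

lemma qint_geom: "(w - 1) * qint w i = w ^ i - (1::'k::field)"
proof (induction i)
  case 0 then show ?case by (simp add: qint_def)
next
  case (Suc i) then show ?case by (simp add: qint_Suc algebra_simps)
qed

lemma acoef_Suc: "acoef w (Suc j) = acoef w j * (w - 1) * w ^ (Suc j)"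
proof -
  have "Suc j * (Suc j + 1) div 2 = j * (j + 1) div 2 + Suc j"
  proof -
    have "Suc j * (Suc j + 1) = j * (j + 1) + 2 * Suc j" by simp
    then show ?thesis by simp
  qed
  then show ?thesis by (simp add: acoef_def power_add mult_ac)
qed

context YD begin

abbreviation "HM \<equiv> HAmul n w"
abbreviation "U \<equiv> rho_u n w"
abbreviation "V \<equiv> HApow n w (rho_u n w)"
abbreviation "Gt \<equiv> HAt n (Hb n 1 0) (Ae n 0)"
abbreviation "Xt \<equiv> HAt n (Hb n 0 1) (Ae n 0)"
abbreviation "gg \<equiv> Hb n 1 0"
abbreviation "xx \<equiv> Hb n 0 1"

lemma assoc_f: "HM (HM T S) R = HM T (HM S R)"
  by (intro ext HAmul_assoc[OF wn npos])



definition ee :: "nat \<Rightarrow> nat" where "ee j = ((n - 1) * (j + 1)) mod n"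
definition AJ :: "nat \<Rightarrow> 'k Ael" where "AJ j = Apow n w (Au n) (j + 1)"
definition beta :: "nat \<Rightarrow> 'k" where "beta j = acoef w j * w ^ (j * ee j)"

lemma ee_lt: "ee j < n" using npos by (simp add: ee_def)

lemma qint_n: "qint w n = 0"
proof -
  have "(w - 1) * qint w n = 0" using wn by (simp add: qint_geom)
  then show ?thesis using w1 by simp
qed

lemma w_ee: "w ^ ee j * w ^ (j + 1) = 1"
proof -
  have "w ^ ee j = w ^ ((n - 1) * (j + 1))" unfolding ee_def by (rule pow_mod_n[OF wn, symmetric])
  then have "w ^ ee j * w ^ (j + 1) = w ^ ((n - 1) * (j + 1) + (j + 1))" by (simp add: power_add)
  also have "(n - 1) * (j + 1) + (j + 1) = n * (j + 1)" using npos by (cases n) auto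
  also have "w ^ (n * (j + 1)) = 1" using wn by (metis power_mult power_one)
  finally show ?thesis .
qed

lemma w_ee_Suc: "w ^ ee (Suc j) * w = w ^ ee j"
proof -
  have "w ^ ee (Suc j) * w * w ^ (j + 1) = 1" using w_ee[of "Suc j"] by (simp add: mult_ac)
  then have "w ^ ee (Suc j) * w * w ^ (j + 1) = w ^ ee j * w ^ (j + 1)" using w_ee[of j] by simp
  moreover have "w ^ (j + 1) \<noteq> 0" using w0 by simp
  ultimately show ?thesis by simp
qed

lemma beta_0: "beta 0 = 1" by (simp add: beta_def acoef_def)

lemma beta_rel: "beta j * (w ^ ee j - w) + beta (Suc j) * qint w (Suc (Suc j)) = 0"
proof -
  define \<iota> where "\<iota> = w ^ ee j"
  have it: "\<iota> * w ^ (j + 1) = 1" unfolding \<iota>_def by (rule w_ee)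
  have i2: "w ^ ee (Suc j) * w = \<iota>" unfolding \<iota>_def by (rule w_ee_Suc)
  have b0: "beta j = acoef w j * \<iota> ^ j" unfolding beta_def \<iota>_def by (metis power_mult mult.commute)
  have pm: "w ^ (Suc j * ee (Suc j)) = (w ^ ee (Suc j)) ^ Suc j" by (metis power_mult mult.commute)
  have "beta (Suc j) = acoef w j * (w - 1) * w ^ Suc j * (w ^ ee (Suc j)) ^ Suc j"
    unfolding beta_def acoef_Suc pm ..
  also have "\<dots> = acoef w j * (w - 1) * (w ^ ee (Suc j) * w) ^ Suc j" by (simp add: power_mult_distrib mult_ac)
  also have "\<dots> = acoef w j * (w - 1) * \<iota> ^ Suc j" by (simp add: i2)
  finally have b1: "beta (Suc j) = acoef w j * (w - 1) * \<iota> ^ Suc j" .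
  have q: "(w - 1) * qint w (Suc (Suc j)) = w * w ^ (j + 1) - 1" by (simp add: qint_geom)
  have "beta j * (w ^ ee j - w) + beta (Suc j) * qint w (Suc (Suc j)) = acoef w j * \<iota> ^ j * (\<iota> - w + \<iota> * ((w - 1) * qint w (Suc (Suc j))))"
    unfolding b0 b1 \<iota>_def[symmetric] by (simp add: algebra_simps)
  also have "\<iota> - w + \<iota> * ((w - 1) * qint w (Suc (Suc j))) = 0"
    unfolding q using it by (simp add: algebra_simps)
  finally show ?thesis by simp
qed

lemma AJ_small: "Suc j < n \<Longrightarrow> AJ j = Ae n (Suc j)"
  unfolding AJ_def using Apow_u[OF n2] by simp
lemma AJ_last: "Suc j = n \<Longrightarrow> AJ j = (\<lambda>k. w * Ae n 0 k)"
  unfolding AJ_def using Apow_u_n[OF n2] by simp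

lemma act_g_AJ: assumes "j < n" shows "ACT gg (AJ j) = (\<lambda>k. w ^ Suc j * AJ j k)"
proof (cases "Suc j < n")
  case True then show ?thesis unfolding AJ_small[OF True] by (rule act_g_Ae)
next
  case False
  then have s: "Suc j = n" using assms by simp
  have "ACT gg (AJ j) k = w ^ Suc j * AJ j k" for k
    unfolding AJ_last[OF s] act_scal_m using act_g_Ae[OF npos] s wn by (simp del: One_nat_def)
  then show ?thesis by auto
qed

lemma act_x_AJ: assumes "j < n" shows "ACT xx (AJ j) = (\<lambda>k. qint w (Suc j) * Ae n j k)"
proof (cases "Suc j < n")
  case True then show ?thesis unfolding AJ_small[OF True] using act_x_Ae[OF True] by (simp only: diff_Suc_1)
next
  case False
  then have s: "Suc j = n" using assms by simp
  have "ACT xx (AJ j) k = qint w (Suc j) * Ae n j k" for k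
    unfolding AJ_last[OF s] act_scal_m using act_x_Ae[OF npos] s qint_n by (simp add: qint_def del: One_nat_def)
  then show ?thesis by auto
qed

lemma U_form: "U = (\<lambda>a b k. \<Sum>j<n. beta j * HAt n (Hb n (ee j) j) (AJ j) a b k)"
proof -
  have "Hmul n w (Hpow n w (Hx n) j) (Hpow n w (Hginv n w) (j + 1)) = (\<lambda>c d. w ^ (j * ee j) * Hb n (ee j) j c d)" if "j < n" for j
  proof -
    have g: "Hpow n w (Hginv n w) (j + 1) = Hb n (ee j) 0" unfolding ee_def Hpow_ginv[OF n2] Hb_mod ..
    have "Hmul n w (Hb n 0 j) (Hb n (ee j) 0) = (\<lambda>c d. w ^ (j * ee j) * Hb n (ee j) j c d)"
      using that ee_lt npos by (simp add: fun_eq_iff Hmul_basis)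
    then show ?thesis unfolding g Hpow_x[OF n2] .
  qed
  then show ?thesis unfolding rho_u_def[of n w]
    by (intro ext sum.cong refl) (simp add: AJ_def beta_def HAt_scal_left)
qed

lemma LMt: "HM (HAt n K (Ae n 0)) (HAt n K' m) = HAt n (Hmul n w K K') m"
  unfolding HAmul_tensor_f by (rule HAt_cong) (simp_all add: Amul_unit_left npos)
lemma RMt: "HM (HAt n K' m) (HAt n K (Ae n 0)) = HAt n (Hmul n w K' K) m"
  unfolding HAmul_tensor_f by (rule HAt_cong) (simp_all add: Amul_unit_right npos)

lemma Hm_g_l: "a < n \<Longrightarrow> b < n \<Longrightarrow> Hmul n w (Hb n 1 0) (Hb n a b) = Hb n (1 + a) b"
  using n2 by (simp add: fun_eq_iff Hmul_basis del: One_nat_def)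
lemma Hm_g_r: "a < n \<Longrightarrow> b < n \<Longrightarrow> Hmul n w (Hb n a b) (Hb n 1 0) = (\<lambda>c d. w ^ b * Hb n (a + 1) b c d)"
  using n2 by (simp add: fun_eq_iff Hmul_basis del: One_nat_def)
lemma Hm_x_l: "a < n \<Longrightarrow> b < n \<Longrightarrow> Hmul n w (Hb n 0 1) (Hb n a b) = (\<lambda>c d. w ^ a * Hb n a (1 + b) c d)"
  using n2 by (simp add: fun_eq_iff Hmul_basis del: One_nat_def)
lemma Hm_x_l': "a < n \<Longrightarrow> b < n \<Longrightarrow> Hmul n w (Hb n 0 1) (Hb n a b) = (\<lambda>c d. w ^ a * Hb n a (Suc b) c d)"
  using Hm_x_l by simp

lemma Hm_x_r: "a < n \<Longrightarrow> b < n \<Longrightarrow> Hmul n w (Hb n a b) (Hb n 0 1) = Hb n a (b + 1)"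
  using n2 by (simp add: fun_eq_iff Hmul_basis del: One_nat_def)

lemma Hm_x_r': "a < n \<Longrightarrow> b < n \<Longrightarrow> Hmul n w (Hb n a b) (Hb n 0 1) = Hb n a (Suc b)"
  using Hm_x_r by simp

lemma AA_g_U: "AA gg U = (\<lambda>a b i. \<Sum>j<n. beta j * (w ^ Suc j * HAt n (Hb n (ee j) j) (AJ j) a b i))"
proof -
  have "AA gg U = (\<lambda>a b i. \<Sum>j<n. beta j * HAt n (Hb n (ee j) j) (ACT gg (AJ j)) a b i)"
    unfolding U_form by (simp add: AA_sum AA_scal AA_HAt del: One_nat_def)
  also have "\<dots> = (\<lambda>a b i. \<Sum>j<n. beta j * (w ^ Suc j * HAt n (Hb n (ee j) j) (AJ j) a b i))"
    by (intro ext sum.cong refl) (simp add: act_g_AJ HAt_scal_right del: One_nat_def)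
  finally show ?thesis .
qed

lemma AA_x_U: "AA xx U = (\<lambda>a b i. \<Sum>j<n. beta j * (qint w (Suc j) * HAt n (Hb n (ee j) j) (Ae n j) a b i))"
proof -
  have "AA xx U = (\<lambda>a b i. \<Sum>j<n. beta j * HAt n (Hb n (ee j) j) (ACT xx (AJ j)) a b i)"
    unfolding U_form by (simp add: AA_sum AA_scal AA_HAt del: One_nat_def)
  also have "\<dots> = (\<lambda>a b i. \<Sum>j<n. beta j * (qint w (Suc j) * HAt n (Hb n (ee j) j) (Ae n j) a b i))"
    by (intro ext sum.cong refl) (simp add: act_x_AJ HAt_scal_right del: One_nat_def)
  finally show ?thesis .
qed

lemma Rg: "HM Gt (AA gg U) = (\<lambda>c d k. w * HM U Gt c d k)"
proof -
  have L: "HM Gt (AA gg U) = (\<lambda>c d k. \<Sum>j<n. beta j * (w ^ Suc j * HAt n (Hb n (1 + ee j) j) (AJ j) c d k))"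
    unfolding AA_g_U by (simp add: fun_eq_iff HAmul_sum_right HAmul_scal_right LMt Hm_g_l ee_lt del: One_nat_def)
  have R: "HM U Gt = (\<lambda>c d k. \<Sum>j<n. beta j * (w ^ j * HAt n (Hb n (ee j + 1) j) (AJ j) c d k))"
    unfolding U_form by (simp add: fun_eq_iff HAmul_sum_left HAmul_scal_left RMt Hm_g_r ee_lt HAt_scal_left del: One_nat_def)
  show ?thesis unfolding L R by (simp add: fun_eq_iff sum_distrib_left mult_ac add.commute)
qed

lemma Hb_mod': "Hb n (a mod n) = Hb n a" by (rule ext)+ (simp add: Hb_def)

lemma ee_Suc_Hb: "Hb n (1 + ee (Suc j)) = Hb n (ee j)"
proof -
  have "(1 + ee (Suc j)) mod n = ee j"
  proof -
    have "(1 + ee (Suc j)) mod n = (1 + (n - 1) * (Suc j + 1)) mod n"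
      unfolding ee_def by (simp only: mod_add_right_eq)
    also have "1 + (n - 1) * (Suc j + 1) = (n - 1) * (j + 1) + n" using arith_aux[OF npos] .
    also have "((n - 1) * (j + 1) + n) mod n = ee j" by (simp add: ee_def)
    finally show ?thesis .
  qed
  have "Hb n (1 + ee (Suc j)) = Hb n ((1 + ee (Suc j)) mod n)" by (rule Hb_mod'[symmetric])
  then show ?thesis by (simp only: \<open>(1 + ee (Suc j)) mod n = ee j\<close>)
qed

lemma ee_0_Hb: "Hb n (1 + ee 0) = Hb n 0"
proof -
  have e0: "ee 0 = n - 1" using npos by (simp add: ee_def)
  have m0: "(1 + ee 0) mod n = 0" unfolding e0 using npos by simp
  have "Hb n (1 + ee 0) = Hb n ((1 + ee 0) mod n)" by (rule Hb_mod'[symmetric])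
  then show ?thesis by (simp only: m0)
qed

lemma Rx: "(\<lambda>c d k. HM Xt U c d k + HM Gt (AA xx U) c d k) = (\<lambda>c d k. One n c d k + w * HM U Xt c d k)"
proof (intro ext)
  fix c d k
  define F where "F j = (HAt n (Hb n (ee j) (Suc j)) (AJ j) c d k :: 'k)" for j
  define G where "G j = (HAt n (Hb n (1 + ee j) j) (Ae n j) c d k :: 'k)" for j
  have X1: "HM Xt U c d k = (\<Sum>j<n. beta j * (w ^ ee j * F j))"
    unfolding U_form F_def by (simp add: HAmul_sum_right HAmul_scal_right LMt Hm_x_l' ee_lt HAt_scal_left del: One_nat_def)
  have X2: "HM Gt (AA xx U) c d k = (\<Sum>j<n. beta j * (qint w (Suc j) * G j))"
    unfolding AA_x_U G_def by (simp add: HAmul_sum_right HAmul_scal_right LMt Hm_g_l ee_lt del: One_nat_def)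
  have X3: "HM U Xt c d k = (\<Sum>j<n. beta j * F j)"
    unfolding U_form F_def by (simp add: HAmul_sum_left HAmul_scal_left RMt Hm_x_r' ee_lt del: One_nat_def)
  obtain m where nm: "n = Suc m" using npos by (cases n) auto
  have Fm: "F m = 0" unfolding F_def using nm by (simp add: Hb_big HAt_def)
  have G0: "G 0 = One n c d k" unfolding G_def ee_0_Hb ..
  have GF: "G (Suc j) = F j" if "j < m" for j
  proof -
    have "AJ j = Ae n (Suc j)" using that nm by (intro AJ_small) simp
    then show ?thesis unfolding F_def G_def ee_Suc_Hb by simp
  qed
  have sp1: "(\<Sum>j<n. f j) = (\<Sum>j<m. f j) + f m" for f :: "nat \<Rightarrow> 'k" using nm by simp
  have sp2: "(\<Sum>j<n. f j) = f 0 + (\<Sum>j<m. f (Suc j))" for f :: "nat \<Rightarrow> 'k" unfolding nm by (rule sum.lessThan_Suc_shift)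
  have q1: "qint w (Suc 0) = 1" by (simp add: qint_def)
  have "HM Xt U c d k + HM Gt (AA xx U) c d k = (\<Sum>j<m. beta j * (w ^ ee j * F j) + beta (Suc j) * (qint w (Suc (Suc j)) * F j)) + One n c d k"
    unfolding X1 X2 sp1[of "\<lambda>j. beta j * (w ^ ee j * F j)"] sp2[of "\<lambda>j. beta j * (qint w (Suc j) * G j)"]
    by (simp add: Fm G0 GF beta_0 q1 sum.distrib)
  also have "(\<Sum>j<m. beta j * (w ^ ee j * F j) + beta (Suc j) * (qint w (Suc (Suc j)) * F j)) = (\<Sum>j<m. w * (beta j * F j))"
  proof (intro sum.cong refl)
    fix j
    have "beta j * (w ^ ee j * F j) + beta (Suc j) * (qint w (Suc (Suc j)) * F j) - w * (beta j * F j)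
       = (beta j * (w ^ ee j - w) + beta (Suc j) * qint w (Suc (Suc j))) * F j" by (simp add: algebra_simps)
    then show "beta j * (w ^ ee j * F j) + beta (Suc j) * (qint w (Suc (Suc j)) * F j) = w * (beta j * F j)"
      by (simp add: beta_rel)
  qed
  also have "\<dots> = w * HM U Xt c d k"
    unfolding X3 sp1[of "\<lambda>j. beta j * F j"] by (simp add: Fm sum_distrib_left)
  finally show "HM Xt U c d k + HM Gt (AA xx U) c d k = One n c d k + w * HM U Xt c d k" by simp
qed


lemma AA_One_g: "AA gg (One n) = One n"
proof -
  have "ACT gg (Ae n 0) = (\<lambda>k. w ^ 0 * Ae n 0 k)" using act_g_Ae[of 0] npos by simp
  then show ?thesis by (simp add: AA_HAt)
qed

lemma AA_One_x: "AA xx (One n) = (\<lambda>a b i. 0)"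
proof -
  have "ACT xx (Ae n 0) = (\<lambda>k. qint w 0 * Ae n (0 - 1) k)" using act_x_Ae[of 0] npos by simp
  also have "\<dots> = (\<lambda>k. 0)" by (simp add: qint_def)
  finally have e: "ACT xx (Ae n 0) = (\<lambda>k. 0)" .
  show ?thesis unfolding AA_HAt e by (simp add: HAt_def fun_eq_iff)
qed

lemma HM_zero_right: "HM T (\<lambda>a b i. 0) = (\<lambda>a b i. 0)"
  by (simp add: fun_eq_iff HAmul_def)

lemma YDg_V: "i < n \<Longrightarrow> HM Gt (AA gg (V i)) = (\<lambda>c d k. w ^ i * HM (V i) Gt c d k)"
proof (induction i)
  case 0
  show ?case by (simp only: HApow_0 AA_One_g HAmul_one_right_f[OF npos supp3_HAt] HAmul_one_left_f[OF npos supp3_HAt] power_0 mult_1_left)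
next
  case (Suc i)
  then have IH: "HM Gt (AA gg (V i)) = (\<lambda>c d k. w ^ i * HM (V i) Gt c d k)" by simp
  have "HM Gt (AA gg (V (Suc i))) = HM Gt (HM (AA gg U) (AA gg (V i)))"
    by (simp only: HApow_Suc AA_mul_g)
  also have "\<dots> = HM (HM Gt (AA gg U)) (AA gg (V i))" by (simp only: assoc_f)
  also have "\<dots> = HM (\<lambda>c d k. w * HM U Gt c d k) (AA gg (V i))" by (simp only: Rg)
  also have "\<dots> = (\<lambda>c d k. w * HM U (HM Gt (AA gg (V i))) c d k)" by (simp only: HAmul_scal_left_f assoc_f)
  also have "\<dots> = (\<lambda>c d k. w * (w ^ i * HM U (HM (V i) Gt) c d k))" by (simp only: IH HAmul_scal_right_f)
  also have "\<dots> = (\<lambda>c d k. w ^ Suc i * HM (V (Suc i)) Gt c d k)" by (simp add: HApow_Suc assoc_f mult.assoc)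
  finally show ?case .
qed

lemma YDx_V: "i < n \<Longrightarrow> (\<lambda>c d k. HM Xt (V i) c d k + HM Gt (AA xx (V i)) c d k)
    = (\<lambda>c d k. qint w i * V (i - 1) c d k + w ^ i * HM (V i) Xt c d k)"
proof (induction i)
  case 0
  have q: "qint w 0 = 0" by (simp add: qint_def)
  show ?case by (simp only: HApow_0 AA_One_x HM_zero_right HAmul_one_right_f[OF npos supp3_HAt] HAmul_one_left_f[OF npos supp3_HAt] power_0 mult_1_left q mult_zero_left add_0_right add_0_left)
next
  case (Suc i)
  then have IH: "(\<lambda>c d k. HM Xt (V i) c d k + HM Gt (AA xx (V i)) c d k)
    = (\<lambda>c d k. qint w i * V (i - 1) c d k + w ^ i * HM (V i) Xt c d k)" by simp
  have P: "qint w i * HM U (V (i - 1)) c d k = qint w i * V i c d k" for c d k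
  proof (cases i)
    case 0 then show ?thesis by (simp add: qint_def)
  next
    case (Suc j) then show ?thesis by (simp add: HApow_Suc)
  qed
  have "(\<lambda>c d k. HM Xt (V (Suc i)) c d k + HM Gt (AA xx (V (Suc i))) c d k)
     = (\<lambda>c d k. HM (HM Xt U) (V i) c d k + (HM (HM Gt (AA xx U)) (V i) c d k + HM (HM Gt (AA gg U)) (AA xx (V i)) c d k))"
    by (simp only: HApow_Suc AA_mul_x HAmul_add_right_f assoc_f)
  also have "\<dots> = (\<lambda>c d k. HM (\<lambda>c d k. HM Xt U c d k + HM Gt (AA xx U) c d k) (V i) c d k + HM (\<lambda>c d k. w * HM U Gt c d k) (AA xx (V i)) c d k)"
    by (simp only: HAmul_add_left_f Rg add.assoc)
  also have "\<dots> = (\<lambda>c d k. HM (\<lambda>c d k. One n c d k + w * HM U Xt c d k) (V i) c d k + w * HM U (HM Gt (AA xx (V i))) c d k)"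
    by (simp only: Rx HAmul_scal_left_f assoc_f)
  also have "\<dots> = (\<lambda>c d k. V i c d k + w * (HM U (\<lambda>c d k. HM Xt (V i) c d k + HM Gt (AA xx (V i)) c d k) c d k))"
    by (simp add: HAmul_add_left_f HAmul_add_right_f HAmul_scal_left_f HAmul_one_left_f npos supp3_HApow assoc_f distrib_left add.assoc)
  also have "\<dots> = (\<lambda>c d k. V i c d k + w * (qint w i * HM U (V (i - 1)) c d k + w ^ i * HM U (HM (V i) Xt) c d k))"
    by (simp only: IH HAmul_add_right_f HAmul_scal_right_f)
  also have "\<dots> = (\<lambda>c d k. qint w (Suc i) * V (Suc (i) - 1) c d k + w ^ Suc i * HM (V (Suc i)) Xt c d k)"
    by (simp only: P distrib_left) (simp add: qint_Suc HApow_Suc assoc_f algebra_simps)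
  finally show ?case .
qed

end


lemma S4: "(\<Sum>a\<in>A. \<Sum>b\<in>B. \<Sum>c\<in>C. \<Sum>d\<in>D. g a b c d) = (\<Sum>x\<in>A\<times>B\<times>C\<times>D. g (fst x) (fst (snd x)) (fst (snd (snd x))) (snd (snd (snd x))))"
  by (simp add: sum.cartesian_product split_def)

lemma swap44: "(\<Sum>p\<in>A. \<Sum>q\<in>B. \<Sum>p'\<in>C. \<Sum>q'\<in>D. \<Sum>a\<in>E. \<Sum>b\<in>F. \<Sum>a'\<in>G. \<Sum>b'\<in>H. f p q p' q' a b a' b')
  = (\<Sum>a\<in>E. \<Sum>b\<in>F. \<Sum>a'\<in>G. \<Sum>b'\<in>H. \<Sum>p\<in>A. \<Sum>q\<in>B. \<Sum>p'\<in>C. \<Sum>q'\<in>D. f p q p' q' a b a' b')"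
proof -
  let ?f = "\<lambda>x y. f (fst x) (fst (snd x)) (fst (snd (snd x))) (snd (snd (snd x))) (fst y) (fst (snd y)) (fst (snd (snd y))) (snd (snd (snd y)))"
  have L: "(\<Sum>p\<in>A. \<Sum>q\<in>B. \<Sum>p'\<in>C. \<Sum>q'\<in>D. \<Sum>a\<in>E. \<Sum>b\<in>F. \<Sum>a'\<in>G. \<Sum>b'\<in>H. f p q p' q' a b a' b')
     = (\<Sum>x\<in>A\<times>B\<times>C\<times>D. \<Sum>y\<in>E\<times>F\<times>G\<times>H. ?f x y)"
    by (rule trans[OF S4], rule sum.cong[OF refl], rule S4)
  have R: "(\<Sum>a\<in>E. \<Sum>b\<in>F. \<Sum>a'\<in>G. \<Sum>b'\<in>H. \<Sum>p\<in>A. \<Sum>q\<in>B. \<Sum>p'\<in>C. \<Sum>q'\<in>D. f p q p' q' a b a' b')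
     = (\<Sum>y\<in>E\<times>F\<times>G\<times>H. \<Sum>x\<in>A\<times>B\<times>C\<times>D. ?f x y)"
    by (rule trans[OF S4], rule sum.cong[OF refl], rule S4)
  show ?thesis unfolding L R by (rule sum.swap)
qed

context YD begin

abbreviation "Ae0 \<equiv> Ae n 0"

definition Phi :: "'k HHel \<Rightarrow> 'k HAel \<Rightarrow> 'k HAel" where
  "Phi X T = (\<lambda>c d k. \<Sum>a<n. \<Sum>b<n. \<Sum>a'<n. \<Sum>b'<n. \<Sum>p<n. \<Sum>q<n. \<Sum>i<n.
       X a b a' b' * T p q i * HAt n (Hmul n w (Hb n a b) (Hb n p q)) (ACT (Hb n a' b') (Ae n i)) c d k)"

definition Psi :: "'k HHel \<Rightarrow> 'k Ael \<Rightarrow> 'k HAel" where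
  "Psi X m = (\<lambda>c d k. \<Sum>a<n. \<Sum>b<n. \<Sum>a'<n. \<Sum>b'<n. \<Sum>p<n. \<Sum>q<n. \<Sum>i<n.
       X a b a' b' * rho n w (ACT (Hb n a b) m) p q i * HAt n (Hmul n w (Hb n p q) (Hb n a' b')) (Ae n i) c d k)"

lemma YD_lhs_Phi: "YD_lhs n w act0 h m = Phi (Delta n w h) (rho n w m)"
  by (simp add: YD_lhs_def Phi_def)
lemma YD_rhs_Psi: "YD_rhs n w act0 h m = Psi (Delta n w h) m"
  by (simp add: YD_rhs_def Psi_def)

lemma LM: "HM (HAt n K Ae0) (AA h T) = (\<lambda>c d k. \<Sum>p<n. \<Sum>q<n. \<Sum>i<n. T p q i * HAt n (Hmul n w K (Hb n p q)) (ACT h (Ae n i)) c d k)"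
proof -
  have "HAt n (Hmul n w K (Hb n p q)) (Amul n w Ae0 (ACT h (Ae n i))) = HAt n (Hmul n w K (Hb n p q)) (ACT h (Ae n i))" for p q i
    by (rule HAt_cong) (simp_all add: Amul_unit_left npos)
  then show ?thesis unfolding AA_def
    by (simp add: fun_eq_iff HAmul_sum_right HAmul_scal_right HAmul_tensor)
qed

lemma RM: "HM T (HAt n K Ae0) = (\<lambda>c d k. \<Sum>p<n. \<Sum>q<n. \<Sum>i<n. T p q i * HAt n (Hmul n w (Hb n p q) K) (Ae n i) c d k)"
proof -
  have 1: "HM T (HAt n K Ae0) = HM (\<lambda>c d k. \<Sum>p<n. \<Sum>q<n. \<Sum>i<n. T p q i * HAt n (Hb n p q) (Ae n i) c d k) (HAt n K Ae0)"
    by (intro ext HAmul_cong refl) (auto simp: HAt_def Hb_simp Ae_simp collapse cong: if_cong)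
  have "HAt n (Hmul n w (Hb n p q) K) (Amul n w (Ae n i) Ae0) = HAt n (Hmul n w (Hb n p q) K) (Ae n i)" if "i < n" for p q i
    by (rule HAt_cong) (use that npos in \<open>auto simp: Amul_basis Ae_simp\<close>)
  then show ?thesis unfolding 1
    by (simp add: fun_eq_iff HAmul_sum_left HAmul_scal_left HAmul_tensor)
qed

lemma Phi_basis: "Phi X T = (\<lambda>c d k. \<Sum>a<n. \<Sum>b<n. \<Sum>a'<n. \<Sum>b'<n. X a b a' b' * HM (HAt n (Hb n a b) Ae0) (AA (Hb n a' b') T) c d k)"
  unfolding Phi_def LM by (simp add: fun_eq_iff sum_distrib_left mult.assoc)

lemma Psi_basis: "Psi X m = (\<lambda>c d k. \<Sum>a<n. \<Sum>b<n. \<Sum>a'<n. \<Sum>b'<n. X a b a' b' * HM (rho n w (ACT (Hb n a b) m)) (HAt n (Hb n a' b') Ae0) c d k)"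
  unfolding Psi_def RM by (simp add: fun_eq_iff sum_distrib_left mult.assoc)

lemma pull3: "(\<Sum>p\<in>A. \<Sum>q\<in>B. \<Sum>i\<in>C. \<Sum>a\<in>D. g p q i a) = (\<Sum>a\<in>D. \<Sum>p\<in>A. \<Sum>q\<in>B. \<Sum>i\<in>C. g p q i a)"
proof -
  have "(\<Sum>p\<in>A. \<Sum>q\<in>B. \<Sum>i\<in>C. \<Sum>a\<in>D. g p q i a) = (\<Sum>p\<in>A. \<Sum>a\<in>D. \<Sum>q\<in>B. \<Sum>i\<in>C. g p q i a)"
    by (rule sum.cong[OF refl]) (rule sum_reorder3[symmetric])
  also have "\<dots> = (\<Sum>a\<in>D. \<Sum>p\<in>A. \<Sum>q\<in>B. \<Sum>i\<in>C. g p q i a)" by (rule sum.swap)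
  finally show ?thesis .
qed

lemma HAt_expand_f: "HAt n f m = (\<lambda>a b i. \<Sum>p<n. \<Sum>q<n. f p q * HAt n (Hb n p q) m a b i)"
proof (intro ext)
  fix a b i
  show "HAt n f m a b i = (\<Sum>p<n. \<Sum>q<n. f p q * HAt n (Hb n p q) m a b i)"
  proof (cases "a < n \<and> b < n \<and> i < n")
    case True
    then have "(\<Sum>p<n. \<Sum>q<n. f p q * HAt n (Hb n p q) m a b i) = (\<Sum>p<n. \<Sum>q<n. f p q * Hb n p q a b) * m i"
      by (simp add: HAt_def sum_distrib_right mult.assoc)
    then show ?thesis using True by (simp add: Hb_expand HAt_def)
  qed (auto simp: HAt_def)
qed

lemma AA_expand_h: "AA h T = (\<lambda>c d k. \<Sum>p<n. \<Sum>q<n. h p q * AA (Hb n p q) T c d k)"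
proof (intro ext)
  fix c d k
  have "AA h T c d k = (\<Sum>p'<n. \<Sum>q'<n. \<Sum>i<n. \<Sum>p<n. \<Sum>q<n. h p q * (T p' q' i * HAt n (Hb n p' q') (ACT (Hb n p q) (Ae n i)) c d k))"
  proof (cases "c < n \<and> d < n \<and> k < n")
    case True then show ?thesis unfolding AA_def
      by (intro sum.cong refl) (simp add: HAt_def act_lin_h[of n act0 h _ k] sum_distrib_left sum_distrib_right mult_ac)
  qed (auto simp: AA_def HAt_def)
  also have "\<dots> = (\<Sum>p<n. \<Sum>p'<n. \<Sum>q'<n. \<Sum>i<n. \<Sum>q<n. h p q * (T p' q' i * HAt n (Hb n p' q') (ACT (Hb n p q) (Ae n i)) c d k))"
    by (rule pull3)
  also have "\<dots> = (\<Sum>p<n. \<Sum>q<n. \<Sum>p'<n. \<Sum>q'<n. \<Sum>i<n. h p q * (T p' q' i * HAt n (Hb n p' q') (ACT (Hb n p q) (Ae n i)) c d k))"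
    by (rule sum.cong[OF refl], rule pull3)
  also have "\<dots> = (\<Sum>p<n. \<Sum>q<n. h p q * AA (Hb n p q) T c d k)"
    unfolding AA_def by (simp add: sum_distrib_left)
  finally show "AA h T c d k = (\<Sum>p<n. \<Sum>q<n. h p q * AA (Hb n p q) T c d k)" .
qed

lemma Phi_HHt: "Phi (HHt n f f') T = HM (HAt n f Ae0) (AA f' T)"
proof -
  have "Phi (HHt n f f') T = (\<lambda>c d k. \<Sum>a<n. \<Sum>b<n. f a b * (\<Sum>a'<n. \<Sum>b'<n. f' a' b' * HM (HAt n (Hb n a b) Ae0) (AA (Hb n a' b') T) c d k))"
    unfolding Phi_basis by (intro ext sum.cong refl) (simp add: HHt_def sum_distrib_left mult.assoc)
  also have "\<dots> = HM (HAt n f Ae0) (AA f' T)"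
    by (subst HAt_expand_f[of f Ae0], subst AA_expand_h[of f' T]) (simp add: fun_eq_iff HAmul_sum_left HAmul_sum_right HAmul_scal_left HAmul_scal_right sum_distrib_left)
  finally show ?thesis .
qed

lemma rho_sum: "rho n w (\<lambda>i. \<Sum>j\<in>J. F j i) = (\<lambda>a b k. \<Sum>j\<in>J. rho n w (F j) a b k)"
  unfolding rho_def by (simp add: fun_eq_iff sum_distrib_right sum.swap[where B=J])
lemma rho_scal: "rho n w (\<lambda>i. s * F i) = (\<lambda>a b k. s * rho n w F a b k)"
  unfolding rho_def by (simp add: fun_eq_iff sum_distrib_left mult.assoc)
lemma rho_cong: "(\<And>i. i < n \<Longrightarrow> m i = m' i) \<Longrightarrow> rho n w m = rho n w m'"
  unfolding rho_def by (intro ext sum.cong refl) auto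

lemma rho_act_expand: "rho n w (ACT f m) = (\<lambda>a b k. \<Sum>p<n. \<Sum>q<n. f p q * rho n w (ACT (Hb n p q) m) a b k)"
proof -
  have "rho n w (ACT f m) = rho n w (\<lambda>i. \<Sum>p<n. \<Sum>q<n. f p q * ACT (Hb n p q) m i)"
    by (intro rho_cong) (rule act_lin_h)
  then show ?thesis by (simp add: rho_sum rho_scal)
qed

lemma Psi_HHt: "Psi (HHt n f f') m = HM (rho n w (ACT f m)) (HAt n f' Ae0)"
proof -
  have "Psi (HHt n f f') m = (\<lambda>c d k. \<Sum>a<n. \<Sum>b<n. f a b * (\<Sum>a'<n. \<Sum>b'<n. f' a' b' * HM (rho n w (ACT (Hb n a b) m)) (HAt n (Hb n a' b') Ae0) c d k))"
    unfolding Psi_basis by (intro ext sum.cong refl) (simp add: HHt_def sum_distrib_left mult.assoc)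
  also have "\<dots> = HM (rho n w (ACT f m)) (HAt n f' Ae0)"
    by (subst rho_act_expand[of f m], subst HAt_expand_f[of f' Ae0]) (simp add: fun_eq_iff HAmul_sum_left HAmul_sum_right HAmul_scal_left HAmul_scal_right sum_distrib_left)
  finally show ?thesis .
qed

lemma AA_comp: "AA (Hmul n w h h') T = AA h (AA h' T)"
proof -
  have "AA h (AA h' T) = (\<lambda>c d k. \<Sum>p<n. \<Sum>q<n. \<Sum>i<n. T p q i * HAt n (Hb n p q) (ACT h (ACT h' (Ae n i))) c d k)"
    unfolding AA_def[of h' T] by (simp add: AA_sum AA_scal AA_HAt)
  then show ?thesis by (simp add: AA_def act_comp)
qed

lemma act_one_Ae: "i < n \<Longrightarrow> ACT (Hb n 0 0) (Ae n i) = Ae n i"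
  by (auto simp: fun_eq_iff act_one Ae_simp)

lemma LM_AA: "AA h (HM (HAt n K Ae0) S) = HM (HAt n K Ae0) (AA h S)"
proof -
  have 1: "HM (HAt n K Ae0) S = HM (HAt n K Ae0) (AA (Hb n 0 0) S)"
    by (intro ext HAmul_cong refl) (simp add: AA_one)
  have 2: "HM (HAt n K Ae0) (AA (Hb n 0 0) S) = (\<lambda>c d k. \<Sum>p<n. \<Sum>q<n. \<Sum>i<n. S p q i * HAt n (Hmul n w K (Hb n p q)) (Ae n i) c d k)"
    unfolding LM by (intro ext sum.cong refl) (simp add: act_one_Ae)
  show ?thesis unfolding 1 LM by (simp add: AA_sum AA_scal AA_HAt, intro ext sum.cong refl, simp add: act_one_Ae)
qed

lemma HAt_Hmul: "HAt n (Hmul n w K K') Ae0 = HM (HAt n K Ae0) (HAt n K' Ae0)"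
proof -
  have "HAt n (Hmul n w K K') (Amul n w Ae0 Ae0) = HAt n (Hmul n w K K') Ae0"
    by (rule HAt_cong) (simp_all add: Amul_unit_left npos)
  then show ?thesis by (simp add: HAmul_tensor_f)
qed

lemma RM_AA: "AA h (HM S (HAt n K Ae0)) = HM (AA h S) (HAt n K Ae0)"
proof -
  have 1: "HM (AA h S) (HAt n K Ae0) = HM (AA h S) (AA (Hb n 0 0) (HAt n K Ae0))"
    by (intro ext HAmul_cong refl) (simp add: AA_one)
  show ?thesis unfolding 1 AA_HAmul HAmul_AA
  proof (intro ext sum.cong refl)
    fix c d k a b i a' b' i' assume "i \<in> {..<n}" "i' \<in> {..<n}"
    then show "S a b i * HAt n K Ae0 a' b' i' * HAt n (Hmul n w (Hb n a b) (Hb n a' b')) (ACT h (Amul n w (Ae n i) (Ae n i'))) c d k =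
         S a b i * HAt n K Ae0 a' b' i' * HAt n (Hmul n w (Hb n a b) (Hb n a' b')) (Amul n w (ACT h (Ae n i)) (ACT (Hb n 0 0) (Ae n i'))) c d k"
    proof (cases "i' = 0")
      case True
      have e1: "Amul n w (Ae n i) Ae0 = Ae n i" using \<open>i \<in> _\<close> npos by (auto simp: fun_eq_iff Amul_basis Ae_simp)
      have e2: "Amul n w (ACT h (Ae n i)) (ACT (Hb n 0 0) Ae0) = ACT h (Ae n i)"
      proof (rule ext)
        fix k
        have "ACT (Hb n 0 0) Ae0 = Ae0" using npos by (rule act_one_Ae)
        then show "Amul n w (ACT h (Ae n i)) (ACT (Hb n 0 0) Ae0) k = ACT h (Ae n i) k"
          using npos by (simp add: Amul_unit_right act_out)
      qed
      show ?thesis using True by (simp add: e1 e2)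
    qed (simp add: HAt_def Ae_simp)
  qed
qed

end


context YD begin

lemma Phi_sum_X: "Phi (\<lambda>a b a' b'. \<Sum>j\<in>J. F j a b a' b') T = (\<lambda>c d k. \<Sum>j\<in>J. Phi (F j) T c d k)"
  unfolding Phi_basis by (simp add: fun_eq_iff sum_distrib_right sum.swap[where B=J])
lemma Phi_scal_X: "Phi (\<lambda>a b a' b'. s * F a b a' b') T = (\<lambda>c d k. s * Phi F T c d k)"
  unfolding Phi_basis by (simp add: fun_eq_iff sum_distrib_left mult.assoc)
lemma Phi_add_X: "Phi (\<lambda>a b a' b'. F a b a' b' + G a b a' b') T = (\<lambda>c d k. Phi F T c d k + Phi G T c d k)"
  unfolding Phi_basis by (simp add: fun_eq_iff distrib_right sum.distrib)
lemma Phi_sum_T: "Phi X (\<lambda>a b i. \<Sum>j\<in>J. F j a b i) = (\<lambda>c d k. \<Sum>j\<in>J. Phi X (F j) c d k)"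
  unfolding Phi_basis by (simp add: fun_eq_iff AA_sum HAmul_sum_right sum_distrib_left sum.swap[where B=J])
lemma Phi_scal_T: "Phi X (\<lambda>a b i. s * F a b i) = (\<lambda>c d k. s * Phi X F c d k)"
  unfolding Phi_basis by (simp add: fun_eq_iff AA_scal HAmul_scal_right sum_distrib_left mult_ac)
lemma Psi_sum_X: "Psi (\<lambda>a b a' b'. \<Sum>j\<in>J. F j a b a' b') m = (\<lambda>c d k. \<Sum>j\<in>J. Psi (F j) m c d k)"
  unfolding Psi_basis by (simp add: fun_eq_iff sum_distrib_right sum.swap[where B=J])
lemma Psi_scal_X: "Psi (\<lambda>a b a' b'. s * F a b a' b') m = (\<lambda>c d k. s * Psi F m c d k)"
  unfolding Psi_basis by (simp add: fun_eq_iff sum_distrib_left mult.assoc)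
lemma Psi_add_X: "Psi (\<lambda>a b a' b'. F a b a' b' + G a b a' b') m = (\<lambda>c d k. Psi F m c d k + Psi G m c d k)"
  unfolding Psi_basis by (simp add: fun_eq_iff distrib_right sum.distrib)

lemma HHmul_unfold: "HHmul n w X Y = (\<lambda>c d c' d'. \<Sum>a<n. \<Sum>b<n. \<Sum>a'<n. \<Sum>b'<n. \<Sum>p<n. \<Sum>q<n. \<Sum>p'<n. \<Sum>q'<n.
       X a b a' b' * Y p q p' q' *
       HHt n (Hmul n w (Hb n a b) (Hb n p q)) (Hmul n w (Hb n a' b') (Hb n p' q')) c d c' d')"
  by (simp add: HHmul_def fun_eq_iff)

lemma PhiMul: "Phi (HHmul n w X Y) T = Phi X (Phi Y T)"
proof -
  have L: "Phi (HHmul n w X Y) T = (\<lambda>c d k. \<Sum>a<n. \<Sum>b<n. \<Sum>a'<n. \<Sum>b'<n. \<Sum>p<n. \<Sum>q<n. \<Sum>p'<n. \<Sum>q'<n.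
       X a b a' b' * Y p q p' q' * HM (HAt n (Hb n a b) Ae0) (HM (HAt n (Hb n p q) Ae0) (AA (Hb n a' b') (AA (Hb n p' q') T))) c d k)"
    unfolding HHmul_unfold by (simp add: Phi_sum_X Phi_scal_X Phi_HHt HAt_Hmul AA_comp assoc_f)
  have R: "Phi X (Phi Y T) = (\<lambda>c d k. \<Sum>a<n. \<Sum>b<n. \<Sum>a'<n. \<Sum>b'<n. X a b a' b' * (\<Sum>p<n. \<Sum>q<n. \<Sum>p'<n. \<Sum>q'<n.
       Y p q p' q' * HM (HAt n (Hb n a b) Ae0) (HM (HAt n (Hb n p q) Ae0) (AA (Hb n a' b') (AA (Hb n p' q') T))) c d k))"
    unfolding Phi_basis[of X] Phi_basis[of Y] by (simp add: AA_sum AA_scal LM_AA HAmul_sum_right HAmul_scal_right)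
  show ?thesis unfolding L R by (simp add: sum_distrib_left mult.assoc)
qed

lemma PhiR: "Phi X (HM S (HAt n K Ae0)) = HM (Phi X S) (HAt n K Ae0)"
  unfolding Phi_basis by (simp add: fun_eq_iff RM_AA assoc_f[symmetric] HAmul_sum_left HAmul_scal_left)

definition PP :: "'k HHel \<Rightarrow> bool" where "PP X \<longleftrightarrow> (\<forall>m. Phi X (rho n w m) = Psi X m)"

lemma PP_mul: assumes "PP X" "PP Y" shows "PP (HHmul n w X Y)"
  unfolding PP_def
proof
  fix m
  have "Phi (HHmul n w X Y) (rho n w m) = Phi X (Psi Y m)"
    using assms(2) by (simp add: PhiMul PP_def)
  also have "\<dots> = (\<lambda>c d k. \<Sum>p<n. \<Sum>q<n. \<Sum>p'<n. \<Sum>q'<n. Y p q p' q' * HM (Psi X (ACT (Hb n p q) m)) (HAt n (Hb n p' q') Ae0) c d k)"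
    unfolding Psi_basis[of Y] by (simp add: Phi_sum_T Phi_scal_T PhiR assms(1)[unfolded PP_def, rule_format])
  also have "\<dots> = (\<lambda>c d k. \<Sum>p<n. \<Sum>q<n. \<Sum>p'<n. \<Sum>q'<n. \<Sum>a<n. \<Sum>b<n. \<Sum>a'<n. \<Sum>b'<n.
      X a b a' b' * Y p q p' q' * HM (HM (rho n w (ACT (Hb n a b) (ACT (Hb n p q) m))) (HAt n (Hb n a' b') Ae0)) (HAt n (Hb n p' q') Ae0) c d k)"
    unfolding Psi_basis[of X] by (simp add: HAmul_sum_left HAmul_scal_left sum_distrib_left mult_ac)
  also have "\<dots> = (\<lambda>c d k. \<Sum>a<n. \<Sum>b<n. \<Sum>a'<n. \<Sum>b'<n. \<Sum>p<n. \<Sum>q<n. \<Sum>p'<n. \<Sum>q'<n.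
      X a b a' b' * Y p q p' q' * HM (HM (rho n w (ACT (Hb n a b) (ACT (Hb n p q) m))) (HAt n (Hb n a' b') Ae0)) (HAt n (Hb n p' q') Ae0) c d k)"
    by (intro ext) (rule swap44)
  also have "\<dots> = Psi (HHmul n w X Y) m"
    unfolding HHmul_unfold by (simp add: Psi_sum_X Psi_scal_X Psi_HHt HAt_Hmul act_comp assoc_f)
  finally show "Phi (HHmul n w X Y) (rho n w m) = Psi (HHmul n w X Y) m" .
qed

lemma supp3_rho: "supp3 n (rho n w m)"
  unfolding supp3_def rho_def
proof (intro allI impI sum.neutral ballI)
  fix c d k i assume "\<not> (c < n \<and> d < n \<and> k < n)"
  then show "m i * V i c d k = 0" using supp3_HApow[of n w U i] by (simp add: supp3_def)
qed

lemma rho_expand: "rho n w m = (\<lambda>a b k. \<Sum>i<n. m i * V i a b k)"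
  by (simp add: rho_def fun_eq_iff)

lemma PP_one: "PP (HHt n (Hb n 0 0) (Hb n 0 0))"
  unfolding PP_def
proof
  fix m
  have 1: "Phi (HHt n (Hb n 0 0) (Hb n 0 0)) (rho n w m) = rho n w m"
    unfolding Phi_HHt using supp3_rho[of m]
    by (auto simp: fun_eq_iff HAmul_one_left npos AA_one supp3_def)
  have "rho n w (ACT (Hb n 0 0) m) = rho n w m" by (rule rho_cong) (simp add: act_one)
  then have 2: "Psi (HHt n (Hb n 0 0) (Hb n 0 0)) m = rho n w m"
    unfolding Psi_HHt using supp3_rho[of m]
    by (auto simp: fun_eq_iff HAmul_one_right npos supp3_def)
  show "Phi (HHt n (Hb n 0 0) (Hb n 0 0)) (rho n w m) = Psi (HHt n (Hb n 0 0) (Hb n 0 0)) m"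
    unfolding 1 2 ..
qed

lemma rho_act_g: "rho n w (ACT gg m) = (\<lambda>a b k. \<Sum>i<n. m i * (w ^ i * V i a b k))"
proof -
  have "rho n w (ACT gg m) = rho n w (\<lambda>k. \<Sum>i<n. m i * (w ^ i * Ae n i k))"
    by (rule rho_cong) (simp add: act_lin_m[of n act0 gg m] act_g_Ae del: One_nat_def)
  also have "\<dots> = (\<lambda>a b k. \<Sum>i<n. m i * (w ^ i * rho n w (Ae n i) a b k))"
    by (simp add: rho_sum rho_scal)
  also have "\<dots> = (\<lambda>a b k. \<Sum>i<n. m i * (w ^ i * V i a b k))"
    by (intro ext sum.cong refl) (simp add: rho_Ae)
  finally show ?thesis .
qed

lemma rho_act_x: "rho n w (ACT xx m) = (\<lambda>a b k. \<Sum>i<n. m i * (qint w i * V (i - 1) a b k))"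
proof -
  have "rho n w (ACT xx m) = rho n w (\<lambda>k. \<Sum>i<n. m i * (qint w i * Ae n (i - 1) k))"
    by (rule rho_cong) (simp add: act_lin_m[of n act0 xx m] act_x_Ae del: One_nat_def)
  also have "\<dots> = (\<lambda>a b k. \<Sum>i<n. m i * (qint w i * rho n w (Ae n (i - 1)) a b k))"
    by (simp add: rho_sum rho_scal)
  also have "\<dots> = (\<lambda>a b k. \<Sum>i<n. m i * (qint w i * V (i - 1) a b k))"
    by (intro ext sum.cong refl) (simp add: rho_Ae)
  finally show ?thesis .
qed

lemma PP_Dg: "PP (Dg n)"
  unfolding PP_def
proof
  fix m
  have D: "Dg n = HHt n gg gg" by (simp add: Dg_def Hg_def)
  have "Phi (Dg n) (rho n w m) = (\<lambda>c d k. \<Sum>i<n. m i * HM Gt (AA gg (V i)) c d k)"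
    unfolding D Phi_HHt rho_expand by (simp add: fun_eq_iff AA_sum AA_scal HAmul_sum_right HAmul_scal_right)
  also have "\<dots> = (\<lambda>c d k. \<Sum>i<n. m i * (w ^ i * HM (V i) Gt c d k))"
    by (intro ext sum.cong refl) (simp add: YDg_V del: One_nat_def)
  also have "\<dots> = Psi (Dg n) m"
    unfolding D Psi_HHt rho_act_g by (simp add: fun_eq_iff HAmul_sum_left HAmul_scal_left)
  finally show "Phi (Dg n) (rho n w m) = Psi (Dg n) m" .
qed

lemma PP_Dx: "PP (Dx n)"
  unfolding PP_def
proof
  fix m
  have D: "Dx n = (\<lambda>a b a' b'. HHt n xx (Hb n 0 0) a b a' b' + HHt n gg xx a b a' b')"
    by (simp add: Dx_def Hg_def Hx_def Hone_def)
  have "Phi (Dx n) (rho n w m) = (\<lambda>c d k. HM Xt (AA (Hb n 0 0) (rho n w m)) c d k + HM Gt (AA xx (rho n w m)) c d k)"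
    unfolding D Phi_add_X Phi_HHt ..
  also have "\<dots> = (\<lambda>c d k. HM Xt (rho n w m) c d k + HM Gt (AA xx (rho n w m)) c d k)"
    by (intro ext arg_cong2[where f="(+)"] HAmul_cong refl) (simp_all add: AA_one)
  also have "\<dots> = (\<lambda>c d k. \<Sum>i<n. m i * (HM Xt (V i) c d k + HM Gt (AA xx (V i)) c d k))"
    unfolding rho_expand by (simp add: fun_eq_iff AA_sum AA_scal HAmul_sum_right HAmul_scal_right sum.distrib distrib_left)
  also have "\<dots> = (\<lambda>c d k. \<Sum>i<n. m i * (qint w i * V (i - 1) c d k + w ^ i * HM (V i) Xt c d k))"
  proof (intro ext sum.cong refl)
    fix c d k i assume "i \<in> {..<n}"
    then show "m i * (HM Xt (V i) c d k + HM Gt (AA xx (V i)) c d k) = m i * (qint w i * V (i - 1) c d k + w ^ i * HM (V i) Xt c d k)"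
      using fun_cong[OF fun_cong[OF fun_cong[OF YDx_V[of i]]], of c d k] by (simp del: One_nat_def)
  qed
  also have "\<dots> = (\<lambda>c d k. HM (rho n w (ACT xx m)) (One n) c d k + HM (rho n w (ACT gg m)) Xt c d k)"
  proof -
    have "HM (rho n w (ACT xx m)) (One n) = rho n w (ACT xx m)"
      by (rule HAmul_one_right_f[OF npos supp3_rho])
    then show ?thesis unfolding rho_act_g
      by (simp add: rho_act_x fun_eq_iff HAmul_sum_left HAmul_scal_left sum.distrib distrib_left del: One_nat_def)
  qed
  also have "\<dots> = Psi (Dx n) m"
    unfolding D Psi_add_X Psi_HHt ..
  finally show "Phi (Dx n) (rho n w m) = Psi (Dx n) m" .
qed

lemma PP_pow: "PP X \<Longrightarrow> PP (HHpow n w X c)"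
  by (induction c) (simp_all add: HHpow_0 HHpow_Suc PP_one PP_mul)

lemma YD_main: "YD_lhs n w act0 h m = YD_rhs n w act0 h m"
proof -
  have "YD_lhs n w act0 h m = (\<lambda>a b i. \<Sum>c<n. \<Sum>d<n. h c d * Phi (HHmul n w (HHpow n w (Dg n) c) (HHpow n w (Dx n) d)) (rho n w m) a b i)"
    unfolding YD_lhs_Phi Delta_def by (simp add: Phi_sum_X Phi_scal_X)
  also have "\<dots> = (\<lambda>a b i. \<Sum>c<n. \<Sum>d<n. h c d * Psi (HHmul n w (HHpow n w (Dg n) c) (HHpow n w (Dx n) d)) m a b i)"
    using PP_mul[OF PP_pow[OF PP_Dg] PP_pow[OF PP_Dx]] by (simp add: PP_def)
  also have "\<dots> = YD_rhs n w act0 h m"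
    unfolding YD_rhs_Psi Delta_def by (simp add: Psi_sum_X Psi_scal_X)
  finally show ?thesis .
qed

end

theorem proposition5p3:
  fixes n :: nat and w :: "'k::field" and act0 :: "nat \<Rightarrow> nat \<Rightarrow> nat \<Rightarrow> 'k Ael"
  assumes "CHAR('k) = 0"
    and "2 \<le> n"
    and "primitive_root n w"
    and "is_module_algebra n w act0"
    and "act n act0 (Hg n) (Au n) = (\<lambda>k. w * Au n k)"
    and "act n act0 (Hx n) (Au n) = Aone n"
  shows "\<forall>h m. YD_lhs n w act0 h m = YD_rhs n w act0 h m"
proof -
  interpret YD n w act0 using assms by unfold_locales auto
  show ?thesis using YD_main by blast
qed


end
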